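(* Let $X_1(0)=X_2(0)=\dots\in\mathbb{N}$ and $F_1=F_2=\dots=F$ with $\sum_{k}1/F(k)<\infty$. For $A\ge3$ consider the $A$-agent urn constructed from the birth processes $\Xi_1,\dots,\Xi_A$ and set $S(A)=\min_{i=3,\dots,A}T_i$. Then for all $s>0$ and all integers $x_2>X_2(0)$, $$\frac{\mathbb{P}_{A,2}\big(S(A)>s\mid X_2^{(A)}(\infty)\ge x_2\big)}{\mathbb{P}_{A,2}(S(A)>s)}\to\infty\quad\text{and}\quad \mathbb{P}_{A,2}\big(S(A)>s\mid X_2^{(A)}(\infty)\ge x_2\big)\to0\qquad\text{as }A\to\infty.$$
   Context: $\mathbb{N}=\{1,2,\dots\}$, $e^{(i)}$ the $i$-th unit vector. Let $\Xi_1,\Xi_2,\dots$ be independent pure birth processes: $\Xi_i$ has independent sojourn times $\tau_i(k)$, $k\ge X_i(0)$, exponential with rate $F_i(k)$, $\Xi_i(t)=\min\{k:\sum_{l=X_i(0)}^k\tau_i(l)>t\}$, and explosion time $T_i=\sum_{k\ge X_i(0)}\tau_i(k)$. For each $A$, with $\Xi^{(A)}=(\Xi_1,\dots,\Xi_A)$, $t_0=0$, $t_{n+1}=\inf\{t>t_n:\Xi^{(A)}(t)\ne\Xi^{(A)}(t_n)\}$, the urn is $X^{(A)}(n)=\Xi^{(A)}(t_n)$ (with $\mathbb{P}(X^{(A)}(n+1)-X^{(A)}(n)=e^{(i)}\mid X^{(A)}(n))=F_i(X_i^{(A)}(n))/\sum_{j\le A}F_j(X_j^{(A)}(n))$), $X_i^{(A)}(\infty)=\lim_nX_i^{(A)}(n)$,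 $sMon_i=\{\exists N\ \forall n\ge N\ \forall j\ne i: X_j^{(A)}(n)=X_j^{(A)}(N)\}$, and $\mathbb{P}_{A,2}(\cdot)=\mathbb{P}(\cdot\cap sMon_1^c\cap sMon_2^c)/\mathbb{P}(sMon_1^c\cap sMon_2^c)$. *)

theory Defs
  imports "HOL-Probability.Probability"
begin

text \<open>tau i k omega: sojourn time of agent i at level k (k >= x0 = X_i(0)).\<close>

definition Xi :: "(nat \<Rightarrow> nat \<Rightarrow> 'a \<Rightarrow> real) \<Rightarrow> nat \<Rightarrow> nat \<Rightarrow> real \<Rightarrow> 'a \<Rightarrow> enat" where
  "Xi tau x0 i t \<omega> =
     (if \<exists>k. x0 \<le> k \<and> t < (\<Sum>l=x0..k. tau i l \<omega>)
      then enat (LEAST k. x0 \<le> k \<and> t < (\<Sum>l=x0..k. tau i l \<omega>))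
      else \<infinity>)"

primrec jump :: "(nat \<Rightarrow> nat \<Rightarrow> 'a \<Rightarrow> real) \<Rightarrow> nat \<Rightarrow> nat \<Rightarrow> nat \<Rightarrow> 'a \<Rightarrow> real" where
  "jump tau x0 A 0 \<omega> = 0"
| "jump tau x0 A (Suc n) \<omega> =
     Inf {s. jump tau x0 A n \<omega> < s \<and>
             (\<exists>i\<in>{1..A}. Xi tau x0 i s \<omega> \<noteq> Xi tau x0 i (jump tau x0 A n \<omega>) \<omega>)}"

definition urn :: "(nat \<Rightarrow> nat \<Rightarrow> 'a \<Rightarrow> real) \<Rightarrow> nat \<Rightarrow> nat \<Rightarrow> nat \<Rightarrow> nat \<Rightarrow> 'a \<Rightarrow> enat" where
  "urn tau x0 A n i \<omega> = Xi tau x0 i (jump tau x0 A n \<omega>) \<omega>"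

definition urn_lim :: "(nat \<Rightarrow> nat \<Rightarrow> 'a \<Rightarrow> real) \<Rightarrow> nat \<Rightarrow> nat \<Rightarrow> nat \<Rightarrow> 'a \<Rightarrow> enat" where
  "urn_lim tau x0 A i \<omega> = (SUP n. urn tau x0 A n i \<omega>)"

definition sMon :: "(nat \<Rightarrow> nat \<Rightarrow> 'a \<Rightarrow> real) \<Rightarrow> nat \<Rightarrow> nat \<Rightarrow> nat \<Rightarrow> 'a \<Rightarrow> bool" where
  "sMon tau x0 A i \<omega> =
     (\<exists>N. \<forall>n\<ge>N. \<forall>j\<in>{1..A}. j \<noteq> i \<longrightarrow> urn tau x0 A n j \<omega> = urn tau x0 A N j \<omega>)"

definition Texpl :: "(nat \<Rightarrow> nat \<Rightarrow> 'a \<Rightarrow> real) \<Rightarrow> nat \<Rightarrow> nat \<Rightarrow> 'a \<Rightarrow> ennreal" where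
  "Texpl tau x0 i \<omega> = (\<Sum>k. ennreal (tau i (x0 + k) \<omega>))"

definition Smin :: "(nat \<Rightarrow> nat \<Rightarrow> 'a \<Rightarrow> real) \<Rightarrow> nat \<Rightarrow> nat \<Rightarrow> 'a \<Rightarrow> ennreal" where
  "Smin tau x0 A \<omega> = Min ((\<lambda>i. Texpl tau x0 i \<omega>) ` {3..A})"

definition Ecal :: "'a measure \<Rightarrow> (nat \<Rightarrow> nat \<Rightarrow> 'a \<Rightarrow> real) \<Rightarrow> nat \<Rightarrow> nat \<Rightarrow> 'a set" where
  "Ecal M tau x0 A = {\<omega>\<in>space M. \<not> sMon tau x0 A 1 \<omega> \<and> \<not> sMon tau x0 A 2 \<omega>}"

definition PA2 :: "'a measure \<Rightarrow> (nat \<Rightarrow> nat \<Rightarrow> 'a \<Rightarrow> real) \<Rightarrow> nat \<Rightarrow> nat \<Rightarrow> 'a set \<Rightarrow> real" where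
  "PA2 M tau x0 A B = measure M (B \<inter> Ecal M tau x0 A) / measure M (Ecal M tau x0 A)"

definition PA2_cond :: "'a measure \<Rightarrow> (nat \<Rightarrow> nat \<Rightarrow> 'a \<Rightarrow> real) \<Rightarrow> nat \<Rightarrow> nat \<Rightarrow> 'a set \<Rightarrow> 'a set \<Rightarrow> real" where
  "PA2_cond M tau x0 A B C = PA2 M tau x0 A (B \<inter> C) / PA2 M tau x0 A C"

end

theory Submission
  imports Defs
begin

definition ps :: "(nat \<Rightarrow> nat \<Rightarrow> 'a \<Rightarrow> real) \<Rightarrow> nat \<Rightarrow> nat \<Rightarrow> nat \<Rightarrow> 'a \<Rightarrow> real" where
  "ps tau x0 i k \<omega> = (\<Sum>l=x0..k. tau i l \<omega>)"

definition Pk :: "(nat \<Rightarrow> nat \<Rightarrow> 'a \<Rightarrow> real) \<Rightarrow> nat \<Rightarrow> nat \<Rightarrow> nat \<Rightarrow> real \<Rightarrow> 'a \<Rightarrow> bool" where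
  "Pk tau x0 i k t \<omega> = (x0 \<le> k \<and> t < ps tau x0 i k \<omega> \<and> (\<forall>k'\<in>{x0..<k}. ps tau x0 i k' \<omega> \<le> t))"

lemma Xi_eq_enat: "Xi tau x0 i t \<omega> = enat k \<longleftrightarrow> Pk tau x0 i k t \<omega>"
proof
  assume h: "Xi tau x0 i t \<omega> = enat k"
  then have ex: "\<exists>k. x0 \<le> k \<and> t < ps tau x0 i k \<omega>"
    unfolding Xi_def ps_def by (auto split: if_splits)
  with h have k: "k = (LEAST k. x0 \<le> k \<and> t < ps tau x0 i k \<omega>)"
    unfolding Xi_def ps_def by (auto split: if_splits)
  show "Pk tau x0 i k t \<omega>"
    unfolding Pk_def using LeastI_ex[OF ex] not_less_Least k
    by (metis atLeastLessThan_iff not_le_imp_less)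
next
  assume h: "Pk tau x0 i k t \<omega>"
  then have ex: "\<exists>k. x0 \<le> k \<and> t < ps tau x0 i k \<omega>" unfolding Pk_def by auto
  have "(LEAST k. x0 \<le> k \<and> t < ps tau x0 i k \<omega>) = k"
    using h unfolding Pk_def
    by (intro Least_equality) (auto simp: not_le[symmetric])
  then show "Xi tau x0 i t \<omega> = enat k"
    using ex unfolding Xi_def ps_def by auto
qed

lemma Xi_eq_infty: "Xi tau x0 i t \<omega> = \<infinity> \<longleftrightarrow> (\<forall>k\<ge>x0. ps tau x0 i k \<omega> \<le> t)"
  unfolding Xi_def ps_def by (auto simp: not_less)

lemma Xi_ge_x0: "Xi tau x0 i t \<omega> = enat k \<Longrightarrow> x0 \<le> k"
  by (simp add: Xi_eq_enat Pk_def)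

lemma Xi_ge: "enat m \<le> Xi tau x0 i t \<omega> \<longleftrightarrow> (\<forall>k\<in>{x0..<m}. ps tau x0 i k \<omega> \<le> t)"
proof (cases "Xi tau x0 i t \<omega>")
  case (enat k0)
  then have P: "Pk tau x0 i k0 t \<omega>" by (simp add: Xi_eq_enat)
  show ?thesis
  proof
    assume "enat m \<le> Xi tau x0 i t \<omega>"
    then have "m \<le> k0" using enat by simp
    then show "\<forall>k\<in>{x0..<m}. ps tau x0 i k \<omega> \<le> t" using P unfolding Pk_def by auto
  next
    assume a: "\<forall>k\<in>{x0..<m}. ps tau x0 i k \<omega> \<le> t"
    have "m \<le> k0"
    proof (rule ccontr)
      assume "\<not> m \<le> k0"
      then have "k0 \<in> {x0..<m}" using P unfolding Pk_def by auto
      then show False using a P unfolding Pk_def by force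
    qed
    then show "enat m \<le> Xi tau x0 i t \<omega>" using enat by simp
  qed
next
  case infinity
  then show ?thesis using Xi_eq_infty[of tau x0 i t \<omega>] by auto
qed

lemma Xi_mono: assumes "t \<le> t'" shows "Xi tau x0 i t \<omega> \<le> Xi tau x0 i t' \<omega>"
proof (cases "Xi tau x0 i t' \<omega>")
  case (enat k')
  then have P: "Pk tau x0 i k' t' \<omega>" by (simp add: Xi_eq_enat)
  show ?thesis
  proof (rule ccontr)
    assume "\<not> ?thesis"
    then have "enat k' < Xi tau x0 i t \<omega>" using enat by simp
    then have "enat (Suc k') \<le> Xi tau x0 i t \<omega>" by (simp add: Suc_ile_eq)
    then have "ps tau x0 i k' \<omega> \<le> t" using P unfolding Xi_ge Pk_def by auto
    then show False using P assms unfolding Pk_def by auto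
  qed
qed simp

lemma Xi_change:
  assumes "Xi tau x0 i t \<omega> = enat k" "t < s"
  shows "Xi tau x0 i s \<omega> \<noteq> Xi tau x0 i t \<omega> \<longleftrightarrow> ps tau x0 i k \<omega> \<le> s"
proof -
  have P: "Pk tau x0 i k t \<omega>" using assms by (simp add: Xi_eq_enat)
  show ?thesis
  proof
    assume "Xi tau x0 i s \<omega> \<noteq> Xi tau x0 i t \<omega>"
    then have "\<not> Pk tau x0 i k s \<omega>" using assms by (simp add: Xi_eq_enat)
    then show "ps tau x0 i k \<omega> \<le> s" using P assms(2) unfolding Pk_def by auto
  next
    assume "ps tau x0 i k \<omega> \<le> s"
    then have "\<not> Pk tau x0 i k s \<omega>" unfolding Pk_def by auto
    then have "Xi tau x0 i s \<omega> \<noteq> enat k" by (simp add: Xi_eq_enat)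
    then show "Xi tau x0 i s \<omega> \<noteq> Xi tau x0 i t \<omega>" using assms(1) by simp
  qed
qed

definition Vset :: "(nat \<Rightarrow> nat \<Rightarrow> 'a \<Rightarrow> real) \<Rightarrow> nat \<Rightarrow> nat set \<Rightarrow> real \<Rightarrow> 'a \<Rightarrow> real set" where
  "Vset tau x0 I t \<omega> = {ps tau x0 i k \<omega> | i k. i \<in> I \<and> Pk tau x0 i k t \<omega>}"

lemma change_set:
  "{s. t < s \<and> (\<exists>i\<in>I. Xi tau x0 i s \<omega> \<noteq> Xi tau x0 i t \<omega>)} = {s. \<exists>v\<in>Vset tau x0 I t \<omega>. v \<le> s}"
proof safe
  fix s i assume ts: "t < s" and i: "i \<in> I" and ne: "Xi tau x0 i s \<omega> \<noteq> Xi tau x0 i t \<omega>"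
  show "\<exists>v\<in>Vset tau x0 I t \<omega>. v \<le> s"
  proof (cases "Xi tau x0 i t \<omega>")
    case (enat k)
    then have "ps tau x0 i k \<omega> \<le> s" using Xi_change[OF enat ts] ne by simp
    moreover have "Pk tau x0 i k t \<omega>" using enat by (simp add: Xi_eq_enat)
    ultimately show ?thesis using i unfolding Vset_def by blast
  next
    case infinity
    then have "Xi tau x0 i s \<omega> = \<infinity>" using Xi_mono[of t s tau x0 i \<omega>] ts by simp
    then show ?thesis using ne infinity by simp
  qed
next
  fix s v assume v: "v \<in> Vset tau x0 I t \<omega>" "v \<le> s"
  then obtain i k where ik: "i \<in> I" "Pk tau x0 i k t \<omega>" "v = ps tau x0 i k \<omega>" unfolding Vset_def by blast
  then show "t < s" using v unfolding Pk_def by auto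
  have X: "Xi tau x0 i t \<omega> = enat k" using ik by (simp add: Xi_eq_enat)
  have "Xi tau x0 i s \<omega> \<noteq> Xi tau x0 i t \<omega>"
    using Xi_change[OF X \<open>t < s\<close>] ik v by simp
  then show "\<exists>i\<in>I. Xi tau x0 i s \<omega> \<noteq> Xi tau x0 i t \<omega>" using ik by blast
qed

lemma Vset_sub: "Vset tau x0 I t \<omega> \<subseteq> (\<lambda>i. ps tau x0 i (the_enat (Xi tau x0 i t \<omega>)) \<omega>) ` I"
proof
  fix v assume "v \<in> Vset tau x0 I t \<omega>"
  then obtain i k where ik: "i \<in> I" "Pk tau x0 i k t \<omega>" "v = ps tau x0 i k \<omega>" unfolding Vset_def by blast
  then have "Xi tau x0 i t \<omega> = enat k" by (simp add: Xi_eq_enat)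
  then show "v \<in> (\<lambda>i. ps tau x0 i (the_enat (Xi tau x0 i t \<omega>)) \<omega>) ` I" using ik by (intro image_eqI[of _ _ i]) auto
qed

lemma Vset_finite: "finite I \<Longrightarrow> finite (Vset tau x0 I t \<omega>)"
  by (rule finite_subset[OF Vset_sub]) simp

lemma Vset_all_fin:
  assumes "\<forall>i\<in>I. Xi tau x0 i t \<omega> \<noteq> \<infinity>"
  shows "Vset tau x0 I t \<omega> = (\<lambda>i. ps tau x0 i (the_enat (Xi tau x0 i t \<omega>)) \<omega>) ` I"
proof
  show "Vset tau x0 I t \<omega> \<subseteq> (\<lambda>i. ps tau x0 i (the_enat (Xi tau x0 i t \<omega>)) \<omega>) ` I" by (rule Vset_sub)
  show "(\<lambda>i. ps tau x0 i (the_enat (Xi tau x0 i t \<omega>)) \<omega>) ` I \<subseteq> Vset tau x0 I t \<omega>"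
  proof
    fix v assume "v \<in> (\<lambda>i. ps tau x0 i (the_enat (Xi tau x0 i t \<omega>)) \<omega>) ` I"
    then obtain i where i: "i \<in> I" "v = ps tau x0 i (the_enat (Xi tau x0 i t \<omega>)) \<omega>" by blast
    then obtain k where k: "Xi tau x0 i t \<omega> = enat k" using assms by (cases "Xi tau x0 i t \<omega>") auto
    then have "Pk tau x0 i k t \<omega>" by (simp add: Xi_eq_enat)
    then show "v \<in> Vset tau x0 I t \<omega>" using i k unfolding Vset_def by auto
  qed
qed

lemma Inf_up_set:
  fixes V :: "real set"
  assumes "finite V" "V \<noteq> {}"
  shows "Inf {s. \<exists>v\<in>V. v \<le> s} = Min V"
proof -
  have "{s. \<exists>v\<in>V. v \<le> s} = {Min V..}"
  proof safe
    fix s v assume "v \<in> V" "v \<le> s" then show "Min V \<le> s" using assms Min_le order.trans by blast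
  next
    fix s assume "Min V \<le> s" then show "\<exists>v\<in>V. v \<le> s" using assms Min_in by blast
  qed
  then show ?thesis by simp
qed

lemma jump_Suc:
  "jump tau x0 A (Suc n) \<omega> = Inf {s. \<exists>v\<in>Vset tau x0 {1..A} (jump tau x0 A n \<omega>) \<omega>. v \<le> s}"
  by (simp add: change_set)

lemma jump_Suc_le:
  "jump tau x0 A (Suc n) \<omega> \<le> r \<longleftrightarrow>
    (Vset tau x0 {1..A} (jump tau x0 A n \<omega>) \<omega> = {} \<and> Inf ({}::real set) \<le> r) \<or>
    (\<exists>v\<in>Vset tau x0 {1..A} (jump tau x0 A n \<omega>) \<omega>. v \<le> r)"
proof (cases "Vset tau x0 {1..A} (jump tau x0 A n \<omega>) \<omega> = {}")
  case True
  then show ?thesis unfolding jump_Suc by simp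
next
  case False
  then show ?thesis
    unfolding jump_Suc by (simp add: Inf_up_set Vset_finite Min_le_iff)
qed

lemma ps_Suc: "x0 \<le> Suc k \<Longrightarrow> ps tau x0 i (Suc k) \<omega> = ps tau x0 i k \<omega> + tau i (Suc k) \<omega>"
  unfolding ps_def by (simp add: sum.cl_ivl_Suc)

lemma ps_x0: "ps tau x0 i x0 \<omega> = tau i x0 \<omega>"
  unfolding ps_def by simp

lemma ps_sum: "x0 \<le> k \<Longrightarrow> ps tau x0 i k \<omega> = (\<Sum>j<Suc k - x0. tau i (x0 + j) \<omega>)"
proof (induction k)
  case 0
  then show ?case by (simp add: ps_x0)
next
  case (Suc k)
  show ?case
  proof (cases "x0 = Suc k")
    case True
    then show ?thesis by (simp add: ps_x0)
  next
    case False
    then have "x0 \<le> k" using Suc.prems by simp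
    then have "Suc (Suc k) - x0 = Suc (Suc k - x0)" by simp
    then show ?thesis using Suc.IH[OF \<open>x0 \<le> k\<close>] ps_Suc[OF Suc.prems, of tau i \<omega>] \<open>x0 \<le> k\<close>
      by simp
  qed
qed

locale path =
  fixes tau :: "nat \<Rightarrow> nat \<Rightarrow> 'a \<Rightarrow> real" and x0 A :: nat and \<omega> :: 'a
  assumes pos: "\<And>i k. i \<in> {1..A} \<Longrightarrow> x0 \<le> k \<Longrightarrow> 0 < tau i k \<omega>"
    and A1: "1 \<le> A"
begin

lemma ps_strict_mono:
  assumes i: "i \<in> {1..A}" and "x0 \<le> k" "k < k'"
  shows "ps tau x0 i k \<omega> < ps tau x0 i k' \<omega>"
  using assms(3)
proof (induction k')
  case 0 then show ?case by simp
next
  case (Suc k')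
  have eq: "ps tau x0 i (Suc k') \<omega> = ps tau x0 i k' \<omega> + tau i (Suc k') \<omega>"
    using assms(2) Suc.prems by (intro ps_Suc) simp
  have t: "0 < tau i (Suc k') \<omega>" using pos[OF i] assms(2) Suc.prems by simp
  show ?case
  proof (cases "k = k'")
    case True then show ?thesis using eq t by simp
  next
    case False then have "k < k'" using Suc.prems by simp
    then show ?thesis using Suc.IH eq t by simp
  qed
qed

lemma ps_mono:
  assumes i: "i \<in> {1..A}" and "x0 \<le> k" "k \<le> k'"
  shows "ps tau x0 i k \<omega> \<le> ps tau x0 i k' \<omega>"
  using ps_strict_mono[OF assms(1,2)] assms(3) by (cases "k = k'") (auto simp: less_imp_le)

lemma ps_ge_tau:
  assumes i: "i \<in> {1..A}" and "x0 \<le> k"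
  shows "tau i x0 \<omega> \<le> ps tau x0 i k \<omega>"
  using ps_mono[OF i order.refl assms(2)] by (simp add: ps_x0)

lemma ps_pos:
  assumes i: "i \<in> {1..A}" and "x0 \<le> k"
  shows "0 < ps tau x0 i k \<omega>"
  using ps_ge_tau[OF assms] pos[OF i, of x0] by simp

lemma T_SUP:
  assumes i: "i \<in> {1..A}"
  shows "Texpl tau x0 i \<omega> = (SUP n. ennreal (\<Sum>j<n. tau i (x0 + j) \<omega>))"
proof -
  have "Texpl tau x0 i \<omega> = (SUP n. \<Sum>j<n. ennreal (tau i (x0 + j) \<omega>))"
    unfolding Texpl_def by (rule suminf_eq_SUP)
  also have "\<dots> = (SUP n. ennreal (\<Sum>j<n. tau i (x0 + j) \<omega>))"
    using pos[OF i] by (intro SUP_cong refl sum_ennreal) (auto simp: less_imp_le)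
  finally show ?thesis .
qed

lemma ps_lt_T:
  assumes i: "i \<in> {1..A}" and k: "x0 \<le> k"
  shows "ennreal (ps tau x0 i k \<omega>) < Texpl tau x0 i \<omega>"
proof -
  have "ps tau x0 i k \<omega> < ps tau x0 i (Suc k) \<omega>" using ps_strict_mono[OF i k] by simp
  moreover have "ps tau x0 i (Suc k) \<omega> = (\<Sum>j<Suc (Suc k) - x0. tau i (x0 + j) \<omega>)"
    using k by (intro ps_sum) simp
  ultimately have "ennreal (ps tau x0 i k \<omega>) < ennreal (\<Sum>j<Suc (Suc k) - x0. tau i (x0 + j) \<omega>)"
    using ps_pos[OF i k] by (simp add: ennreal_less_iff)
  also have "\<dots> \<le> Texpl tau x0 i \<omega>" unfolding T_SUP[OF i] by (rule SUP_upper) simp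
  finally show ?thesis .
qed

lemma lt_T:
  assumes i: "i \<in> {1..A}" and t: "ennreal t < Texpl tau x0 i \<omega>"
  shows "\<exists>k\<ge>x0. t < ps tau x0 i k \<omega>"
proof (cases "t < 0")
  case True
  then show ?thesis using ps_pos[OF i order.refl] by (intro exI[of _ x0]) auto
next
  case False
  then obtain n where n: "ennreal t < ennreal (\<Sum>j<n. tau i (x0 + j) \<omega>)"
    using t unfolding T_SUP[OF i] less_SUP_iff by blast
  have "n \<noteq> 0" using n by (cases "n = 0") auto
  then obtain m where m: "n = Suc m" by (cases n) auto
  have "ps tau x0 i (x0 + m) \<omega> = (\<Sum>j<n. tau i (x0 + j) \<omega>)"
    using ps_sum[of x0 "x0 + m" tau i \<omega>] m by simp
  then show ?thesis using n False by (intro exI[of _ "x0 + m"]) (auto simp: ennreal_less_iff)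
qed

lemma Xi_fin:
  assumes i: "i \<in> {1..A}" and t: "ennreal t < Texpl tau x0 i \<omega>"
  shows "Xi tau x0 i t \<omega> \<noteq> \<infinity>"
  using lt_T[OF assms] unfolding Xi_eq_infty by (auto simp: not_le)

definition "Tm = Min ((\<lambda>i. Texpl tau x0 i \<omega>) ` {1..A})"

lemma Tm_le: "i \<in> {1..A} \<Longrightarrow> Tm \<le> Texpl tau x0 i \<omega>"
  unfolding Tm_def by (rule Min_le) auto

lemma lt_Tm_iff: "x < Tm \<longleftrightarrow> (\<forall>i\<in>{1..A}. x < Texpl tau x0 i \<omega>)"
  unfolding Tm_def using A1 by (subst Min_gr_iff) auto

lemma step:
  assumes t0: "0 \<le> t" and tT: "ennreal t < Tm"
  defines "t' \<equiv> Inf {s. \<exists>v\<in>Vset tau x0 {1..A} t \<omega>. v \<le> s}"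
  shows "t < t'" "ennreal t' < Tm" "\<exists>i\<in>{1..A}. Xi tau x0 i t \<omega> < Xi tau x0 i t' \<omega>"
proof -
  have fin: "\<forall>i\<in>{1..A}. Xi tau x0 i t \<omega> \<noteq> \<infinity>"
    using tT lt_Tm_iff Xi_fin by blast
  define g where "g i = ps tau x0 i (the_enat (Xi tau x0 i t \<omega>)) \<omega>" for i
  have P: "Pk tau x0 i (the_enat (Xi tau x0 i t \<omega>)) t \<omega>" if "i \<in> {1..A}" for i
  proof -
    have "Xi tau x0 i t \<omega> \<noteq> \<infinity>" using fin that by blast
    then obtain k where k: "Xi tau x0 i t \<omega> = enat k" by (cases "Xi tau x0 i t \<omega>") auto
    then show ?thesis using Xi_eq_enat[of tau x0 i t \<omega> k] by simp
  qed
  have V: "Vset tau x0 {1..A} t \<omega> = g ` {1..A}"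
    unfolding g_def by (rule Vset_all_fin[OF fin])
  have ne: "g ` {1..A} \<noteq> {}" using A1 by auto
  have t'eq: "t' = Min (g ` {1..A})"
    unfolding t'_def V using ne by (intro Inf_up_set) auto
  obtain i0 where i0: "i0 \<in> {1..A}" "t' = g i0"
    using Min_in[OF _ ne] t'eq by auto
  have tg: "t < g i" if "i \<in> {1..A}" for i using P[OF that] unfolding g_def Pk_def by auto
  show "t < t'" unfolding t'eq using ne tg by (subst Min_gr_iff) auto
  have "ennreal t' < Texpl tau x0 i \<omega>" if i: "i \<in> {1..A}" for i
  proof -
    have "t' \<le> g i" unfolding t'eq using i by (intro Min_le) auto
    moreover have "ennreal (g i) < Texpl tau x0 i \<omega>"
      unfolding g_def using P[OF i] unfolding Pk_def by (intro ps_lt_T[OF i]) auto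
    ultimately show ?thesis using ennreal_leI order.strict_trans1 by blast
  qed
  then show "ennreal t' < Tm" using lt_Tm_iff by blast
  have "\<not> Pk tau x0 i0 (the_enat (Xi tau x0 i0 t \<omega>)) t' \<omega>"
    using i0 unfolding g_def Pk_def by auto
  moreover have "Xi tau x0 i0 t \<omega> \<noteq> \<infinity>" using fin i0(1) by blast
  ultimately have "Xi tau x0 i0 t' \<omega> \<noteq> Xi tau x0 i0 t \<omega>"
  proof (cases "Xi tau x0 i0 t \<omega>")
    case (enat k)
    assume "\<not> Pk tau x0 i0 (the_enat (Xi tau x0 i0 t \<omega>)) t' \<omega>"
    then have "\<not> Pk tau x0 i0 k t' \<omega>" using enat by simp
    then show ?thesis using enat Xi_eq_enat[of tau x0 i0 t' \<omega> k] by simp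
  qed simp
  moreover have "Xi tau x0 i0 t \<omega> \<le> Xi tau x0 i0 t' \<omega>"
    using \<open>t < t'\<close> by (intro Xi_mono) simp
  ultimately show "\<exists>i\<in>{1..A}. Xi tau x0 i t \<omega> < Xi tau x0 i t' \<omega>" using i0 by force
qed

lemma jump_good: "0 \<le> jump tau x0 A n \<omega> \<and> ennreal (jump tau x0 A n \<omega>) < Tm"
proof (induction n)
  case 0
  have "0 < Texpl tau x0 i \<omega>" if i: "i \<in> {1..A}" for i
    using ps_lt_T[OF i order.refl] by (simp add: order.strict_trans1)
  then show ?case using lt_Tm_iff by simp
next
  case (Suc n)
  then show ?case using step[of "jump tau x0 A n \<omega>"] unfolding jump_Suc
    by (meson less_imp_le order.trans)
qed

lemma jump_less: "jump tau x0 A n \<omega> < jump tau x0 A (Suc n) \<omega>"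
  using step(1)[of "jump tau x0 A n \<omega>"] jump_good[of n] unfolding jump_Suc by blast

lemma jump_Xi_step: "\<exists>i\<in>{1..A}. Xi tau x0 i (jump tau x0 A n \<omega>) \<omega> < Xi tau x0 i (jump tau x0 A (Suc n) \<omega>) \<omega>"
  using step(3)[of "jump tau x0 A n \<omega>"] jump_good[of n] unfolding jump_Suc by blast

lemma jump_smono: "strict_mono (\<lambda>n. jump tau x0 A n \<omega>)"
  using jump_less by (simp add: strict_mono_Suc_iff)

lemma jump_fin: "i \<in> {1..A} \<Longrightarrow> Xi tau x0 i (jump tau x0 A n \<omega>) \<omega> \<noteq> \<infinity>"
  using jump_good[of n] lt_Tm_iff Xi_fin by blast

lemma jump_unbounded:
  assumes L: "ennreal L < Tm"
  shows "\<exists>n. L < jump tau x0 A n \<omega>"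
proof (rule ccontr)
  assume "\<not> ?thesis"
  then have le: "jump tau x0 A n \<omega> \<le> L" for n by (simp add: not_less)
  define \<Phi> where "\<Phi> n = (\<Sum>i\<in>{1..A}. the_enat (Xi tau x0 i (jump tau x0 A n \<omega>) \<omega>))" for n
  have finL: "Xi tau x0 i L \<omega> \<noteq> \<infinity>" if "i \<in> {1..A}" for i
    using L lt_Tm_iff Xi_fin that by blast
  have mono_te: "the_enat a \<le> the_enat b" if "a \<le> b" "b \<noteq> \<infinity>" for a b :: enat
    using that by (cases a; cases b) auto
  have smono_te: "the_enat a < the_enat b" if "a < b" "b \<noteq> \<infinity>" for a b :: enat
    using that by (cases a; cases b) auto
  have "\<Phi> n < \<Phi> (Suc n)" for n
    unfolding \<Phi>_def
  proof (rule sum_strict_mono_ex1)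
    show "finite {1..A}" by simp
    show "\<forall>i\<in>{1..A}. the_enat (Xi tau x0 i (jump tau x0 A n \<omega>) \<omega>) \<le> the_enat (Xi tau x0 i (jump tau x0 A (Suc n) \<omega>) \<omega>)"
    proof
      fix i assume i: "i \<in> {1..A}"
      have "Xi tau x0 i (jump tau x0 A n \<omega>) \<omega> \<le> Xi tau x0 i (jump tau x0 A (Suc n) \<omega>) \<omega>"
        using jump_less[of n] by (intro Xi_mono) simp
      then show "the_enat (Xi tau x0 i (jump tau x0 A n \<omega>) \<omega>) \<le> the_enat (Xi tau x0 i (jump tau x0 A (Suc n) \<omega>) \<omega>)"
        by (rule mono_te[OF _ jump_fin[OF i]])
    qed
    obtain i where i: "i \<in> {1..A}" "Xi tau x0 i (jump tau x0 A n \<omega>) \<omega> < Xi tau x0 i (jump tau x0 A (Suc n) \<omega>) \<omega>"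
      using jump_Xi_step[of n] by blast
    then show "\<exists>i\<in>{1..A}. the_enat (Xi tau x0 i (jump tau x0 A n \<omega>) \<omega>) < the_enat (Xi tau x0 i (jump tau x0 A (Suc n) \<omega>) \<omega>)"
      using smono_te[OF i(2) jump_fin[OF i(1), of "Suc n"]] by blast
  qed
  then have grow: "n \<le> \<Phi> n" for n
    by (induction n) (auto simp: Suc_le_eq intro: le_less_trans)
  define B where "B = (\<Sum>i\<in>{1..A}. the_enat (Xi tau x0 i L \<omega>))"
  have "\<Phi> n \<le> B" for n
    unfolding \<Phi>_def B_def
    by (intro sum_mono mono_te Xi_mono le finL) 
  then have "\<Phi> (Suc B) \<le> B" .
  then show False using grow[of "Suc B"] by simp
qed

end

context path begin

lemma Tm_le_Smin: "3 \<le> A \<Longrightarrow> Tm \<le> Smin tau x0 A \<omega>"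
  unfolding Tm_def Smin_def by (rule Min_antimono) auto

lemma Smin_attained:
  assumes "3 \<le> A" "Smin tau x0 A \<omega> < Texpl tau x0 1 \<omega>" "Smin tau x0 A \<omega> < Texpl tau x0 2 \<omega>"
  shows "Tm = Smin tau x0 A \<omega>" "\<exists>i0\<in>{3..A}. Texpl tau x0 i0 \<omega> = Tm"
proof -
  obtain j where j: "j \<in> {1..A}" "Tm = Texpl tau x0 j \<omega>"
    unfolding Tm_def using A1 by (metis (no_types, lifting) Min_in empty_iff finite_atLeastAtMost finite_imageI imageE image_is_empty atLeastAtMost_iff order_refl)
  have le: "Tm \<le> Smin tau x0 A \<omega>" using Tm_le_Smin assms(1) .
  have "j \<noteq> 1" "j \<noteq> 2" using j le assms(2,3) by auto
  then have j3: "j \<in> {3..A}" using j by auto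
  then have "Smin tau x0 A \<omega> \<le> Tm" unfolding j(2) Smin_def by (intro Min_le) auto
  then show "Tm = Smin tau x0 A \<omega>" using le by simp
  show "\<exists>i0\<in>{3..A}. Texpl tau x0 i0 \<omega> = Tm" using j j3 by auto
qed

lemma path_notsMon:
  assumes A3: "3 \<le> A" and S1: "Smin tau x0 A \<omega> < Texpl tau x0 1 \<omega>" and S2: "Smin tau x0 A \<omega> < Texpl tau x0 2 \<omega>"
    and j: "j \<in> {1, 2}"
  shows "\<not> sMon tau x0 A j \<omega>"
proof
  assume "sMon tau x0 A j \<omega>"
  then obtain N where N: "\<And>n j'. n \<ge> N \<Longrightarrow> j' \<in> {1..A} \<Longrightarrow> j' \<noteq> j \<Longrightarrow> urn tau x0 A n j' \<omega> = urn tau x0 A N j' \<omega>"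
    unfolding sMon_def by blast
  obtain i0 where i0: "i0 \<in> {3..A}" "Texpl tau x0 i0 \<omega> = Tm" using Smin_attained[OF A3 S1 S2] by blast
  have i0A: "i0 \<in> {1..A}" using i0 by auto
  obtain k where k: "Xi tau x0 i0 (jump tau x0 A N \<omega>) \<omega> = enat k"
    using jump_fin[OF i0A, of N] by (cases "Xi tau x0 i0 (jump tau x0 A N \<omega>) \<omega>") auto
  have P: "Pk tau x0 i0 k (jump tau x0 A N \<omega>) \<omega>" using k by (simp add: Xi_eq_enat)
  have "ennreal (ps tau x0 i0 k \<omega>) < Tm"
    using ps_lt_T[OF i0A] P i0(2) unfolding Pk_def by auto
  then obtain n where n: "ps tau x0 i0 k \<omega> < jump tau x0 A n \<omega>" using jump_unbounded by blast
  have "jump tau x0 A N \<omega> < jump tau x0 A n \<omega>" using P n unfolding Pk_def by auto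
  then have "N < n" using jump_smono by (metis not_less_iff_gr_or_eq strict_mono_less)
  have "\<not> Pk tau x0 i0 k (jump tau x0 A n \<omega>) \<omega>" using n unfolding Pk_def by auto
  then have "urn tau x0 A n i0 \<omega> \<noteq> urn tau x0 A N i0 \<omega>"
    unfolding urn_def using k Xi_eq_enat[of tau x0 i0 "jump tau x0 A n \<omega>" \<omega> k] by simp
  moreover have "i0 \<noteq> j" using i0 j by auto
  ultimately show False using N[of n i0] \<open>N < n\<close> i0A by simp
qed

lemma path_C:
  assumes A3: "3 \<le> A" and S1: "Smin tau x0 A \<omega> < Texpl tau x0 1 \<omega>" and S2: "Smin tau x0 A \<omega> < Texpl tau x0 2 \<omega>"
    and x2: "x0 < x2" and R: "ennreal (ps tau x0 2 (x2 - 1) \<omega>) < Smin tau x0 A \<omega>"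
  shows "enat x2 \<le> urn_lim tau x0 A 2 \<omega>"
proof -
  have "ennreal (ps tau x0 2 (x2 - 1) \<omega>) < Tm" using R Smin_attained[OF A3 S1 S2] by simp
  then obtain n where n: "ps tau x0 2 (x2 - 1) \<omega> < jump tau x0 A n \<omega>" using jump_unbounded by blast
  have two: "(2::nat) \<in> {1..A}" using A3 by auto
  have "\<forall>k\<in>{x0..<x2}. ps tau x0 2 k \<omega> \<le> jump tau x0 A n \<omega>"
  proof
    fix k assume "k \<in> {x0..<x2}"
    then have "ps tau x0 2 k \<omega> \<le> ps tau x0 2 (x2 - 1) \<omega>" by (intro ps_mono[OF two]) auto
    then show "ps tau x0 2 k \<omega> \<le> jump tau x0 A n \<omega>" using n by simp
  qed
  then have "enat x2 \<le> urn tau x0 A n 2 \<omega>" unfolding urn_def Xi_ge .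
  also have "\<dots> \<le> urn_lim tau x0 A 2 \<omega>" unfolding urn_lim_def by (rule SUP_upper) simp
  finally show ?thesis .
qed

lemma path_Cinv:
  assumes A3: "3 \<le> A" and x2: "x0 < x2" and C: "enat x2 \<le> urn_lim tau x0 A 2 \<omega>"
  shows "ennreal (tau 2 x0 \<omega>) < Smin tau x0 A \<omega>"
proof -
  have "enat (x2 - 1) < urn_lim tau x0 A 2 \<omega>" using C x2
    by (metis Suc_diff_1 Suc_ile_eq gr_implies_not0 not_gr_zero)
  then obtain n where "enat (x2 - 1) < urn tau x0 A n 2 \<omega>" unfolding urn_lim_def less_SUP_iff by blast
  then have "enat x2 \<le> urn tau x0 A n 2 \<omega>" using x2 by (metis Suc_diff_1 Suc_ile_eq gr_implies_not0 not_gr_zero)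
  then have "ps tau x0 2 (x2 - 1) \<omega> \<le> jump tau x0 A n \<omega>" unfolding urn_def Xi_ge using x2 by auto
  moreover have two: "(2::nat) \<in> {1..A}" using A3 by auto
  ultimately have "tau 2 x0 \<omega> \<le> jump tau x0 A n \<omega>" using ps_ge_tau[OF two, of "x2 - 1"] x2 by fastforce
  then have "ennreal (tau 2 x0 \<omega>) \<le> ennreal (jump tau x0 A n \<omega>)" by (rule ennreal_leI)
  also have "\<dots> < Tm" using jump_good by blast
  also have "\<dots> \<le> Smin tau x0 A \<omega>" using Tm_le_Smin[OF A3] .
  finally show ?thesis .
qed

end

locale usetup = prob_space M for M :: "'a measure" +
  fixes tau :: "nat \<Rightarrow> nat \<Rightarrow> 'a \<Rightarrow> real" and x0 :: nat and F :: "nat \<Rightarrow> real"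
  assumes x0: "1 \<le> x0" and Fpos: "\<forall>k. 0 < F k" and summ: "summable (\<lambda>k. 1 / F k)"
    and distr: "\<forall>i\<ge>1. \<forall>k\<ge>x0. distributed M lborel (tau i k) (exponential_density (F k))"
    and indep: "indep_vars (\<lambda>_. borel) (\<lambda>(i, k). tau i k) {(i, k). 1 \<le> i \<and> x0 \<le> k}"
begin

lemma tau_meas: "1 \<le> i \<Longrightarrow> x0 \<le> k \<Longrightarrow> tau i k \<in> borel_measurable M"
  using distr distributed_measurable[of M lborel "tau i k"] by auto

lemma ps_meas: "1 \<le> i \<Longrightarrow> (\<lambda>\<omega>. ps tau x0 i k \<omega>) \<in> borel_measurable M"
  unfolding ps_def by (intro borel_measurable_sum tau_meas) auto

lemma Pk_pred:
  assumes i: "1 \<le> i" and t: "t \<in> borel_measurable M"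
  shows "Measurable.pred M (\<lambda>\<omega>. Pk tau x0 i k (t \<omega>) \<omega>)"
proof -
  have a: "Measurable.pred M (\<lambda>\<omega>. t \<omega> < ps tau x0 i k' \<omega>)" for k'
    unfolding Measurable.pred_def by (rule borel_measurable_less[OF t ps_meas[OF i]])
  have b: "Measurable.pred M (\<lambda>\<omega>. ps tau x0 i k' \<omega> \<le> t \<omega>)" for k'
    unfolding Measurable.pred_def by (rule borel_measurable_le[OF ps_meas[OF i] t])
  have c: "Measurable.pred M (\<lambda>\<omega>. x0 \<le> k)" by (cases "x0 \<le> k") (simp_all add: Measurable.pred_def)
  show ?thesis unfolding Pk_def
    by (intro pred_intros_logic(3) pred_intros_finite(3) a b c) auto
qed

lemma jump_meas: "(\<lambda>\<omega>. jump tau x0 A n \<omega>) \<in> borel_measurable M"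
proof (induction n)
  case 0
  then show ?case by simp
next
  case (Suc n)
  have eq1: "(Vset tau x0 {1..A} (jump tau x0 A n \<omega>) \<omega> = {}) \<longleftrightarrow>
      \<not> (\<exists>i\<in>{1..A}. \<exists>k. Pk tau x0 i k (jump tau x0 A n \<omega>) \<omega>)" for \<omega>
    unfolding Vset_def by blast
  have eq2: "(\<exists>v\<in>Vset tau x0 {1..A} (jump tau x0 A n \<omega>) \<omega>. v \<le> r) \<longleftrightarrow>
      (\<exists>i\<in>{1..A}. \<exists>k. Pk tau x0 i k (jump tau x0 A n \<omega>) \<omega> \<and> ps tau x0 i k \<omega> \<le> r)" for \<omega> r
    unfolding Vset_def by blast
  show ?case
  proof (subst borel_measurable_iff_le, intro allI)
    fix r
    have P: "Measurable.pred M (\<lambda>\<omega>. Pk tau x0 i k (jump tau x0 A n \<omega>) \<omega>)" if "i \<in> {1..A}" for i k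
      using that by (intro Pk_pred[OF _ Suc.IH]) auto
    have Q: "Measurable.pred M (\<lambda>\<omega>. ps tau x0 i k \<omega> \<le> r)" if "i \<in> {1..A}" for i k
      using that unfolding Measurable.pred_def by (intro borel_measurable_le[OF ps_meas]) auto
    have c: "Measurable.pred M (\<lambda>\<omega>. Inf ({}::real set) \<le> r)" by (cases "Inf ({}::real set) \<le> r") (simp_all add: Measurable.pred_def)
    have "Measurable.pred M (\<lambda>\<omega>. (\<not> (\<exists>i\<in>{1..A}. \<exists>k. Pk tau x0 i k (jump tau x0 A n \<omega>) \<omega>) \<and> Inf ({}::real set) \<le> r) \<or>
      (\<exists>i\<in>{1..A}. \<exists>k. Pk tau x0 i k (jump tau x0 A n \<omega>) \<omega> \<and> ps tau x0 i k \<omega> \<le> r))"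
      by (intro pred_intros_logic(2,3,5) pred_intros_finite(4) pred_intros_countable(2) P Q c) auto
    then show "{w \<in> space M. jump tau x0 A (Suc n) w \<le> r} \<in> sets M"
      unfolding Measurable.pred_def jump_Suc_le eq1 eq2 .
  qed
qed

lemma Pk_jump_pred: "1 \<le> i \<Longrightarrow> Measurable.pred M (\<lambda>\<omega>. Pk tau x0 i k (jump tau x0 A n \<omega>) \<omega>)"
  by (rule Pk_pred[OF _ jump_meas])

lemma urn_eq_iff:
  "urn tau x0 A n j \<omega> = urn tau x0 A N j \<omega> \<longleftrightarrow>
    (\<forall>k. Pk tau x0 j k (jump tau x0 A n \<omega>) \<omega> \<longleftrightarrow> Pk tau x0 j k (jump tau x0 A N \<omega>) \<omega>)"
proof -
  have gen: "a = b \<longleftrightarrow> (\<forall>k. a = enat k \<longleftrightarrow> b = enat k)" for a b :: enat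
    by (cases a; cases b) auto
  show ?thesis unfolding urn_def
    by (subst gen[of "Xi tau x0 j (jump tau x0 A n \<omega>) \<omega>"]) (simp only: Xi_eq_enat)
qed

lemma sMon_sets: "{\<omega>\<in>space M. sMon tau x0 A j \<omega>} \<in> sets M"
proof -
  have "Measurable.pred M (\<lambda>\<omega>. \<exists>N. \<forall>n. N \<le> n \<longrightarrow> (\<forall>j'\<in>{1..A}. j' \<noteq> j \<longrightarrow>
    (\<forall>k. Pk tau x0 j' k (jump tau x0 A n \<omega>) \<omega> \<longleftrightarrow> Pk tau x0 j' k (jump tau x0 A N \<omega>) \<omega>)))"
    apply (rule pred_intros_countable(2))
    apply (rule pred_intros_countable(1))
    apply (rule pred_intros_imp')
    apply (rule pred_intros_finite(3))
     apply simp
    apply (rule pred_intros_imp')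
    apply (rule pred_intros_countable(1))
    apply (rule pred_intros_logic(6))
     apply (rule Pk_jump_pred, simp)
    apply (rule Pk_jump_pred, simp)
    done
  then show ?thesis unfolding Measurable.pred_def sMon_def urn_eq_iff .
qed

lemma Ecal_sets: "Ecal M tau x0 A \<in> sets M"
proof -
  have "Ecal M tau x0 A = space M - ({\<omega>\<in>space M. sMon tau x0 A 1 \<omega>} \<union> {\<omega>\<in>space M. sMon tau x0 A 2 \<omega>})"
    unfolding Ecal_def by auto
  then show ?thesis using sMon_sets by auto
qed

lemma urn_lim_ge_iff:
  assumes "0 < x2"
  shows "enat x2 \<le> urn_lim tau x0 A 2 \<omega> \<longleftrightarrow> (\<exists>n. \<forall>k\<in>{x0..<x2}. ps tau x0 2 k \<omega> \<le> jump tau x0 A n \<omega>)"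
proof -
  have "enat x2 \<le> urn_lim tau x0 A 2 \<omega> \<longleftrightarrow> enat (x2 - 1) < urn_lim tau x0 A 2 \<omega>"
    using assms by (metis Suc_diff_1 Suc_ile_eq)
  also have "\<dots> \<longleftrightarrow> (\<exists>n. enat (x2 - 1) < urn tau x0 A n 2 \<omega>)"
    unfolding urn_lim_def less_SUP_iff by simp
  also have "\<dots> \<longleftrightarrow> (\<exists>n. enat x2 \<le> urn tau x0 A n 2 \<omega>)"
    using assms by (metis Suc_diff_1 Suc_ile_eq)
  finally show ?thesis unfolding urn_def Xi_ge .
qed

lemma Cset_sets:
  assumes "0 < x2"
  shows "{\<omega>\<in>space M. enat x2 \<le> urn_lim tau x0 A 2 \<omega>} \<in> sets M"
proof -
  have "Measurable.pred M (\<lambda>\<omega>. \<exists>n. \<forall>k\<in>{x0..<x2}. ps tau x0 2 k \<omega> \<le> jump tau x0 A n \<omega>)"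
  proof (intro pred_intros_countable pred_intros_finite(3))
    fix n k show "Measurable.pred M (\<lambda>\<omega>. ps tau x0 2 k \<omega> \<le> jump tau x0 A n \<omega>)"
      unfolding Measurable.pred_def by (rule borel_measurable_le[OF ps_meas jump_meas]) simp
  qed simp
  then show ?thesis unfolding Measurable.pred_def urn_lim_ge_iff[OF assms] .
qed

lemma Texpl_meas: "1 \<le> i \<Longrightarrow> (\<lambda>\<omega>. Texpl tau x0 i \<omega>) \<in> borel_measurable M"
proof -
  assume i: "1 \<le> i"
  have tk[measurable]: "tau i (x0 + k) \<in> borel_measurable M" for k using tau_meas[OF i, of "x0 + k"] by simp
  show ?thesis unfolding Texpl_def by measurable
qed

lemma Smin_gt_iff: "3 \<le> A \<Longrightarrow> a < Smin tau x0 A \<omega> \<longleftrightarrow> (\<forall>i\<in>{3..A}. a < Texpl tau x0 i \<omega>)"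
  unfolding Smin_def by (subst Min_gr_iff) auto

lemma Smin_ge_iff: "3 \<le> A \<Longrightarrow> a \<le> Smin tau x0 A \<omega> \<longleftrightarrow> (\<forall>i\<in>{3..A}. a \<le> Texpl tau x0 i \<omega>)"
  unfolding Smin_def by (subst Min_ge_iff) auto

lemma Bset_sets: "3 \<le> A \<Longrightarrow> {\<omega>\<in>space M. a < Smin tau x0 A \<omega>} \<in> sets M"
proof -
  assume A: "3 \<le> A"
  have "Measurable.pred M (\<lambda>\<omega>. \<forall>i\<in>{3..A}. a < Texpl tau x0 i \<omega>)"
  proof (intro pred_intros_finite(3))
    fix i assume "i \<in> {3..A}"
    then show "Measurable.pred M (\<lambda>\<omega>. a < Texpl tau x0 i \<omega>)"
      unfolding Measurable.pred_def by (intro borel_measurable_less Texpl_meas) auto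
  qed simp
  then show ?thesis unfolding Measurable.pred_def Smin_gt_iff[OF A] .
qed

end

context usetup begin

abbreviation "Ind \<equiv> {(i, k). 1 \<le> i \<and> x0 \<le> k}"

lemma blocks_indep:
  fixes K :: "'j \<Rightarrow> (nat \<times> nat) set" and \<Phi> :: "'j \<Rightarrow> ((nat \<times> nat) \<Rightarrow> real) \<Rightarrow> bool"
  assumes K: "\<And>j. j \<in> L \<Longrightarrow> K j \<subseteq> Ind" and disj: "disjoint_family_on K L"
    and J: "J \<subseteq> L" "finite J" "J \<noteq> {}"
    and \<Phi>: "\<And>j. j \<in> J \<Longrightarrow> \<Phi> j \<in> measurable (PiM (K j) (\<lambda>_. borel)) (count_space UNIV)"
  shows "prob (\<Inter>j\<in>J. {\<omega>\<in>space M. \<Phi> j (restrict (\<lambda>p. case_prod tau p \<omega>) (K j))}) =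
    (\<Prod>j\<in>J. prob {\<omega>\<in>space M. \<Phi> j (restrict (\<lambda>p. case_prod tau p \<omega>) (K j))})"
proof -
  define \<Phi>' where "\<Phi>' j = (if j \<in> J then \<Phi> j else (\<lambda>_. True))" for j
  have iv: "indep_vars (\<lambda>j. PiM (K j) (\<lambda>_. borel)) (\<lambda>j \<omega>. restrict (\<lambda>p. case_prod tau p \<omega>) (K j)) L"
    using indep_vars_restrict[OF indep K disj] by simp
  have iv2: "indep_vars (\<lambda>_. count_space UNIV) (\<lambda>j \<omega>. \<Phi>' j (restrict (\<lambda>p. case_prod tau p \<omega>) (K j))) L"
    by (rule indep_vars_compose2[OF iv]) (auto simp: \<Phi>'_def \<Phi>)
  have eq: "(\<lambda>\<omega>. \<Phi>' j (restrict (\<lambda>p. case_prod tau p \<omega>) (K j))) -` {True} \<inter> space M =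
      {\<omega>\<in>space M. \<Phi> j (restrict (\<lambda>p. case_prod tau p \<omega>) (K j))}" if "j \<in> J" for j
    using that by (auto simp: \<Phi>'_def)
  have "prob (\<Inter>j\<in>J. (\<lambda>\<omega>. \<Phi>' j (restrict (\<lambda>p. case_prod tau p \<omega>) (K j))) -` {True} \<inter> space M) =
      (\<Prod>j\<in>J. prob ((\<lambda>\<omega>. \<Phi>' j (restrict (\<lambda>p. case_prod tau p \<omega>) (K j))) -` {True} \<inter> space M))"
    by (rule indep_varsD[OF iv2 J(3,2,1)]) simp
  moreover have "(\<Inter>j\<in>J. (\<lambda>\<omega>. \<Phi>' j (restrict (\<lambda>p. case_prod tau p \<omega>) (K j))) -` {True} \<inter> space M) =
      (\<Inter>j\<in>J. {\<omega>\<in>space M. \<Phi> j (restrict (\<lambda>p. case_prod tau p \<omega>) (K j))})"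
    using eq by (intro INF_cong) auto
  moreover have "(\<Prod>j\<in>J. prob ((\<lambda>\<omega>. \<Phi>' j (restrict (\<lambda>p. case_prod tau p \<omega>) (K j))) -` {True} \<inter> space M)) =
      (\<Prod>j\<in>J. prob {\<omega>\<in>space M. \<Phi> j (restrict (\<lambda>p. case_prod tau p \<omega>) (K j))})"
    using eq by (intro prod.cong) auto
  ultimately show ?thesis by simp
qed

definition Kag :: "nat \<Rightarrow> (nat \<times> nat) set" where "Kag i = {(i', k). i' = i \<and> x0 \<le> k}"

lemma agents_indep:
  fixes \<Phi> :: "nat \<Rightarrow> (nat \<Rightarrow> real) \<Rightarrow> bool"
  assumes J: "J \<subseteq> {1..}" "finite J" "J \<noteq> {}"
    and \<Phi>: "\<And>i. i \<in> J \<Longrightarrow> \<Phi> i \<in> measurable (PiM UNIV (\<lambda>_. borel)) (count_space UNIV)"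
  shows "prob (\<Inter>i\<in>J. {\<omega>\<in>space M. \<Phi> i (\<lambda>j. tau i (x0 + j) \<omega>)}) =
    (\<Prod>i\<in>J. prob {\<omega>\<in>space M. \<Phi> i (\<lambda>j. tau i (x0 + j) \<omega>)})"
proof -
  define \<Psi> where "\<Psi> i f = \<Phi> i (\<lambda>j. f (i, x0 + j))" for i and f :: "nat \<times> nat \<Rightarrow> real"
  have K: "Kag i \<subseteq> Ind" if "i \<in> {1..}" for i using that by (auto simp: Kag_def)
  have disj: "disjoint_family_on Kag {1..}" by (auto simp: disjoint_family_on_def Kag_def)
  have meas: "\<Psi> i \<in> measurable (PiM (Kag i) (\<lambda>_. borel)) (count_space UNIV)" if i: "i \<in> J" for i
  proof -
    have "(\<lambda>f j. f (i, x0 + j)) \<in> measurable (PiM (Kag i) (\<lambda>_. borel)) (PiM UNIV (\<lambda>_. borel :: real measure))"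
      by (rule measurable_PiM_single') (auto simp: Kag_def intro!: measurable_component_singleton)
    then show ?thesis unfolding \<Psi>_def using \<Phi>[OF i] by (rule measurable_compose)
  qed
  have ev: "{\<omega>\<in>space M. \<Psi> i (restrict (\<lambda>p. case_prod tau p \<omega>) (Kag i))} =
      {\<omega>\<in>space M. \<Phi> i (\<lambda>j. tau i (x0 + j) \<omega>)}" for i
    by (auto simp: \<Psi>_def Kag_def)
  show ?thesis using blocks_indep[OF K disj J meas] unfolding ev by simp
qed

end

context usetup begin

lemma Fk: "0 < F k" using Fpos by simp

lemma tau_distr: "1 \<le> i \<Longrightarrow> x0 \<le> k \<Longrightarrow> distributed M lborel (tau i k) (exponential_density (F k))"
  using distr by simp

lemma prob_tau_le: "1 \<le> i \<Longrightarrow> x0 \<le> k \<Longrightarrow> 0 \<le> a \<Longrightarrow>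
    prob {\<omega>\<in>space M. tau i k \<omega> \<le> a} = 1 - exp (- a * F k)"
  using exponential_distributedD_le[OF tau_distr _ Fk] by simp

lemma prob_tau_gt: "1 \<le> i \<Longrightarrow> x0 \<le> k \<Longrightarrow> 0 \<le> a \<Longrightarrow>
    prob {\<omega>\<in>space M. a < tau i k \<omega>} = exp (- a * F k)"
  using exponential_distributedD_gt[OF tau_distr _ Fk] by simp

lemma AE_tau_pos: "AE \<omega> in M. \<forall>i. 1 \<le> i \<longrightarrow> (\<forall>k. x0 \<le> k \<longrightarrow> 0 < tau i k \<omega>)"
proof -
  have "AE \<omega> in M. 0 < tau i k \<omega>" if ik: "1 \<le> i" "x0 \<le> k" for i k
  proof -
    have S: "{\<omega>\<in>space M. tau i k \<omega> \<le> 0} \<in> sets M"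
      using tau_meas[OF ik] by measurable
    have "prob {\<omega>\<in>space M. tau i k \<omega> \<le> 0} = 0" using prob_tau_le[OF ik, of 0] by simp
    then have "emeasure M {\<omega>\<in>space M. tau i k \<omega> \<le> 0} = 0" by (simp add: emeasure_eq_measure)
    then show ?thesis using AE_iff_measurable[OF S] by (simp add: not_less)
  qed
  then show ?thesis by (auto simp: AE_all_countable intro!: AE_impI)
qed

definition "Om = {\<omega>\<in>space M. \<forall>i. 1 \<le> i \<longrightarrow> (\<forall>k. x0 \<le> k \<longrightarrow> 0 < tau i k \<omega>)}"

lemma Om_sets: "Om \<in> sets M"
proof -
  have "Measurable.pred M (\<lambda>\<omega>. \<forall>i. 1 \<le> i \<longrightarrow> (\<forall>k. x0 \<le> k \<longrightarrow> 0 < tau i k \<omega>))"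
  proof (intro pred_intros_countable(1) pred_intros_imp')
    fix i k :: nat assume "1 \<le> i" "x0 \<le> k"
    then show "Measurable.pred M (\<lambda>\<omega>. 0 < tau i k \<omega>)"
      unfolding Measurable.pred_def by (intro borel_measurable_less tau_meas) auto
  qed
  then show ?thesis unfolding Om_def Measurable.pred_def .
qed

lemma prob_le_good:
  assumes X: "X \<in> sets M" and Y: "Y \<in> sets M" and sub: "X \<inter> Om \<subseteq> Y"
  shows "prob X \<le> prob Y"
proof -
  have "AE \<omega> in M. \<omega> \<in> X \<longleftrightarrow> \<omega> \<in> X \<inter> Om"
    using AE_tau_pos by eventually_elim (use X sets.sets_into_space[OF X] in \<open>auto simp: Om_def\<close>)
  then have "prob X = prob (X \<inter> Om)" using X Om_sets by (intro measure_eq_AE) auto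
  also have "\<dots> \<le> prob Y" using sub Y by (intro finite_measure_mono)
  finally show ?thesis .
qed

lemma T_ge_term: "ennreal (tau i (x0 + j) \<omega>) \<le> Texpl tau x0 i \<omega>"
  unfolding Texpl_def using sum_le_suminf[OF summableI, of "{j}" "\<lambda>k. ennreal (tau i (x0 + k) \<omega>)"] by simp

lemma T_split: "Texpl tau x0 i \<omega> = (\<Sum>j<N. ennreal (tau i (x0 + j) \<omega>)) + (\<Sum>j. ennreal (tau i (x0 + N + j) \<omega>))"
  unfolding Texpl_def using suminf_offset[OF summableI, of "\<lambda>k. ennreal (tau i (x0 + k) \<omega>)" N]
  by (simp add: add.commute add.left_commute)

lemma nn_integral_tau: "1 \<le> i \<Longrightarrow> x0 \<le> k \<Longrightarrow> (\<integral>\<^sup>+\<omega>. ennreal (tau i k \<omega>) \<partial>M) = ennreal (1 / F k)"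
proof -
  assume ik: "1 \<le> i" "x0 \<le> k"
  have "(\<integral>\<^sup>+\<omega>. ennreal (tau i k \<omega>) \<partial>M) = (\<integral>\<^sup>+x. ennreal (exponential_density (F k) x) * ennreal x \<partial>lborel)"
    by (rule distributed_nn_integral[OF tau_distr[OF ik], symmetric]) simp
  also have "\<dots> = (\<integral>\<^sup>+x. ennreal (erlang_density 0 (F k) x * x ^ 1) \<partial>lborel)"
    by (intro nn_integral_cong) (auto simp: erlang_density_def ennreal_mult'' ennreal_neg)
  also have "\<dots> = ennreal (1 / F k)"
    using nn_integral_erlang_ith_moment[of "F k" 0 1] Fk[of k] by (simp add: divide_ennreal ennreal_1[symmetric] del: ennreal_1)
  finally show ?thesis .
qed

end

context usetup begin

lemma markov:
  fixes Y :: "'a \<Rightarrow> ennreal"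
  assumes Y: "Y \<in> borel_measurable M" and int: "(\<integral>\<^sup>+\<omega>. Y \<omega> \<partial>M) \<le> ennreal e" and c: "0 < c" and e: "0 \<le> e"
  shows "prob {\<omega>\<in>space M. ennreal c \<le> Y \<omega>} \<le> e / c"
proof -
  define S where "S = {\<omega>\<in>space M. ennreal c \<le> Y \<omega>}"
  have S: "S \<in> sets M" unfolding S_def using Y by measurable
  have "ennreal c * emeasure M S = (\<integral>\<^sup>+\<omega>. ennreal c * indicator S \<omega> \<partial>M)"
    by (rule nn_integral_cmult_indicator[OF S, symmetric])
  also have "\<dots> \<le> (\<integral>\<^sup>+\<omega>. Y \<omega> \<partial>M)"
    by (intro nn_integral_mono) (auto simp: S_def indicator_def)
  also have "\<dots> \<le> ennreal e" by (rule int)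
  finally have "ennreal (c * prob S) \<le> ennreal e"
    using c by (simp add: emeasure_eq_measure ennreal_mult)
  then have "c * prob S \<le> e" using e by (simp add: ennreal_le_iff)
  then show ?thesis unfolding S_def[symmetric] using c by (simp add: field_simps)
qed

lemma summ_shift: "summable (\<lambda>j. 1 / F (x0 + N + j))"
  using summable_ignore_initial_segment[OF summ, of "x0 + N"] by (simp add: add.commute)

lemma nn_tail: "1 \<le> i \<Longrightarrow> (\<integral>\<^sup>+\<omega>. (\<Sum>j. ennreal (tau i (x0 + N + j) \<omega>)) \<partial>M) = ennreal (\<Sum>j. 1 / F (x0 + N + j))"
proof -
  assume i: "1 \<le> i"
  have m: "(\<lambda>\<omega>. ennreal (tau i (x0 + N + j) \<omega>)) \<in> borel_measurable M" for j
    using tau_meas[OF i, of "x0 + N + j"] by measurable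
  have "(\<integral>\<^sup>+\<omega>. (\<Sum>j. ennreal (tau i (x0 + N + j) \<omega>)) \<partial>M) = (\<Sum>j. (\<integral>\<^sup>+\<omega>. ennreal (tau i (x0 + N + j) \<omega>) \<partial>M))"
    by (rule nn_integral_suminf[OF m])
  also have "\<dots> = (\<Sum>j. ennreal (1 / F (x0 + N + j)))"
    using nn_integral_tau[OF i] by simp
  also have "\<dots> = ennreal (\<Sum>j. 1 / F (x0 + N + j))"
    using Fpos by (intro suminf_ennreal2 summ_shift) (auto simp: less_imp_le)
  finally show ?thesis .
qed

definition "Stot = (\<Sum>j. 1 / F (x0 + j))"

lemma Stot_nonneg: "0 \<le> Stot"
  unfolding Stot_def using summ_shift[of 0] Fpos by (intro suminf_nonneg) (auto simp: less_imp_le)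

lemma pT_gt: "1 \<le> i \<Longrightarrow> 0 \<le> a \<Longrightarrow> exp (- a * F x0) \<le> prob {\<omega>\<in>space M. ennreal a < Texpl tau x0 i \<omega>}"
proof -
  assume i: "1 \<le> i" and a: "0 \<le> a"
  have "exp (- a * F x0) = prob {\<omega>\<in>space M. a < tau i x0 \<omega>}" using prob_tau_gt[OF i order.refl a] by simp
  also have "\<dots> \<le> prob {\<omega>\<in>space M. ennreal a < Texpl tau x0 i \<omega>}"
  proof (intro finite_measure_mono)
    show "{\<omega>\<in>space M. ennreal a < Texpl tau x0 i \<omega>} \<in> sets M" using Texpl_meas[OF i] by measurable
    show "{\<omega>\<in>space M. a < tau i x0 \<omega>} \<subseteq> {\<omega>\<in>space M. ennreal a < Texpl tau x0 i \<omega>}"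
    proof safe
      fix \<omega> assume "\<omega> \<in> space M" "a < tau i x0 \<omega>"
      then have "ennreal a < ennreal (tau i x0 \<omega>)" using a by (simp add: ennreal_less_iff)
      also have "\<dots> \<le> Texpl tau x0 i \<omega>" using T_ge_term[of i 0 \<omega>] by simp
      finally show "ennreal a < Texpl tau x0 i \<omega>" .
    qed
  qed
  finally show ?thesis .
qed

lemma pT_ge: "1 \<le> i \<Longrightarrow> 0 < c \<Longrightarrow> prob {\<omega>\<in>space M. ennreal c \<le> Texpl tau x0 i \<omega>} \<le> Stot / c"
proof -
  assume i: "1 \<le> i" and c: "0 < c"
  have "(\<integral>\<^sup>+\<omega>. Texpl tau x0 i \<omega> \<partial>M) = ennreal Stot"
    using nn_tail[OF i, of 0] unfolding Texpl_def Stot_def by simp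
  then show ?thesis using markov[OF Texpl_meas[OF i] _ c Stot_nonneg] by simp
qed

lemma pT_le: "1 \<le> i \<Longrightarrow> 0 \<le> u \<Longrightarrow> prob {\<omega>\<in>space M. Texpl tau x0 i \<omega> \<le> ennreal u} \<le> 1 - exp (- u * F x0)"
proof -
  assume i: "1 \<le> i" and u: "0 \<le> u"
  have "prob {\<omega>\<in>space M. Texpl tau x0 i \<omega> \<le> ennreal u} \<le> prob {\<omega>\<in>space M. tau i x0 \<omega> \<le> u}"
  proof (intro finite_measure_mono)
    show "{\<omega>\<in>space M. tau i x0 \<omega> \<le> u} \<in> sets M" using tau_meas[OF i order.refl] by measurable
    show "{\<omega>\<in>space M. Texpl tau x0 i \<omega> \<le> ennreal u} \<subseteq> {\<omega>\<in>space M. tau i x0 \<omega> \<le> u}"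
    proof safe
      fix \<omega> assume "\<omega> \<in> space M" "Texpl tau x0 i \<omega> \<le> ennreal u"
      then have "ennreal (tau i x0 \<omega>) \<le> ennreal u" using T_ge_term[of i 0 \<omega>] by simp
      then show "tau i x0 \<omega> \<le> u" using u by (simp add: ennreal_le_iff)
    qed
  qed
  also have "\<dots> = 1 - exp (- u * F x0)" by (rule prob_tau_le[OF i order.refl u])
  finally show ?thesis .
qed

end

context usetup begin

lemma head_prob:
  assumes i: "1 \<le> i" and N: "0 < N" and a: "0 \<le> a"
  shows "prob {\<omega>\<in>space M. \<forall>j\<in>{..<N}. tau i (x0 + j) \<omega> \<le> a} = (\<Prod>j<N. 1 - exp (- a * F (x0 + j)))"
proof -
  define J where "J = (\<lambda>j. (i, x0 + j)) ` {..<N}"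
  have inj: "inj_on (\<lambda>j. (i, x0 + j)) {..<N}" by (auto simp: inj_on_def)
  have J: "J \<noteq> {}" "finite J" "J \<subseteq> Ind" using N i by (auto simp: J_def)
  have "prob (\<Inter>p\<in>J. case_prod tau p -` {..a} \<inter> space M) = (\<Prod>p\<in>J. prob (case_prod tau p -` {..a} \<inter> space M))"
    by (rule indep_varsD[OF indep J]) simp
  moreover have "(\<Inter>p\<in>J. case_prod tau p -` {..a} \<inter> space M) = {\<omega>\<in>space M. \<forall>j\<in>{..<N}. tau i (x0 + j) \<omega> \<le> a}"
    using N by (auto simp: J_def)
  moreover have "(\<Prod>p\<in>J. prob (case_prod tau p -` {..a} \<inter> space M)) = (\<Prod>j<N. prob {\<omega>\<in>space M. tau i (x0 + j) \<omega> \<le> a})"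
    unfolding J_def by (subst prod.reindex[OF inj]) (auto intro!: prod.cong arg_cong[where f=prob])
  moreover have "prob {\<omega>\<in>space M. tau i (x0 + j) \<omega> \<le> a} = 1 - exp (- a * F (x0 + j))" for j
    using prob_tau_le[OF i _ a, of "x0 + j"] by simp
  ultimately show ?thesis by simp
qed

lemma head_tail_indep:
  assumes i: "1 \<le> i"
  shows "prob ({\<omega>\<in>space M. \<forall>j\<in>{..<N}. tau i (x0 + j) \<omega> \<le> a} \<inter> {\<omega>\<in>space M. (\<Sum>j. ennreal (tau i (x0 + N + j) \<omega>)) < b}) =
    prob {\<omega>\<in>space M. \<forall>j\<in>{..<N}. tau i (x0 + j) \<omega> \<le> a} * prob {\<omega>\<in>space M. (\<Sum>j. ennreal (tau i (x0 + N + j) \<omega>)) < b}"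
proof -
  define K where "K l = (if l = (0::nat) then (\<lambda>j. (i, x0 + j)) ` {..<N} else (\<lambda>j. (i, x0 + N + j)) ` UNIV)" for l
  define \<Phi> where "\<Phi> l f = (if l = (0::nat) then (\<forall>j\<in>{..<N}. f (i, x0 + j) \<le> a) else (\<Sum>j. ennreal (f (i, x0 + N + j))) < b)"
    for l and f :: "nat \<times> nat \<Rightarrow> real"
  have K: "K l \<subseteq> Ind" if "l \<in> {0, 1}" for l using i by (auto simp: K_def)
  have disj: "disjoint_family_on K {0, 1}" by (auto simp: disjoint_family_on_def K_def)
  have meas: "\<Phi> l \<in> measurable (PiM (K l) (\<lambda>_. borel)) (count_space UNIV)" if "l \<in> {0, 1}" for l
  proof (cases "l = 0")
    case True
    have "Measurable.pred (PiM (K 0) (\<lambda>_. borel)) (\<lambda>f. \<forall>j\<in>{..<N}. f (i, x0 + j) \<le> a)"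
    proof (intro pred_intros_finite(3))
      fix j assume j: "j \<in> {..<N}"
      have "(\<lambda>f. f (i, x0 + j)) \<in> borel_measurable (PiM (K 0) (\<lambda>_. borel))"
        using j by (intro measurable_component_singleton) (auto simp: K_def)
      then show "Measurable.pred (PiM (K 0) (\<lambda>_. borel)) (\<lambda>f. f (i, x0 + j) \<le> a)"
        unfolding Measurable.pred_def by (intro borel_measurable_le) auto
    qed simp
    then show ?thesis using True unfolding \<Phi>_def by simp
  next
    case False
    then have l: "l = 1" using that by simp
    have c: "(\<lambda>f. f (i, x0 + N + j)) \<in> borel_measurable (PiM (K 1) (\<lambda>_. borel))" for j
      by (intro measurable_component_singleton) (auto simp: K_def)
    have "(\<lambda>f. ennreal (f (i, x0 + N + j))) \<in> borel_measurable (PiM (K 1) (\<lambda>_. borel))" for j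
      using measurable_compose[OF c measurable_ennreal] by simp
    then have "(\<lambda>f. \<Sum>j. ennreal (f (i, x0 + N + j))) \<in> borel_measurable (PiM (K 1) (\<lambda>_. borel))"
      by measurable
    then have "Measurable.pred (PiM (K 1) (\<lambda>_. borel)) (\<lambda>f. (\<Sum>j. ennreal (f (i, x0 + N + j))) < b)"
      unfolding Measurable.pred_def by (intro borel_measurable_less) auto
    then show ?thesis using l unfolding \<Phi>_def by simp
  qed
  have eq0: "{\<omega>\<in>space M. \<Phi> 0 (restrict (\<lambda>p. case_prod tau p \<omega>) (K 0))} = {\<omega>\<in>space M. \<forall>j\<in>{..<N}. tau i (x0 + j) \<omega> \<le> a}"
    by (auto simp: \<Phi>_def K_def)
  have eq1: "{\<omega>\<in>space M. \<Phi> 1 (restrict (\<lambda>p. case_prod tau p \<omega>) (K 1))} = {\<omega>\<in>space M. (\<Sum>j. ennreal (tau i (x0 + N + j) \<omega>)) < b}"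
    by (auto simp: \<Phi>_def K_def)
  show ?thesis using blocks_indep[OF K disj order.refl _ _ meas] eq0 eq1 by simp
qed

lemma small_ball:
  assumes s: "0 < s"
  shows "\<exists>c>0. \<forall>i\<ge>1. c \<le> prob {\<omega>\<in>space M. Texpl tau x0 i \<omega> \<le> ennreal s}"
proof -
  obtain N0 where N0: "\<forall>n\<ge>N0. norm (\<Sum>j. 1 / F (x0 + (j + n))) < s / 4"
    using suminf_exist_split[of "s / 4" "\<lambda>j. 1 / F (x0 + j)"] s summ_shift[of 0] by auto
  define N where "N = max N0 1"
  have N: "0 < N" "N0 \<le> N" by (auto simp: N_def)
  define St where "St = (\<Sum>j. 1 / F (x0 + N + j))"
  have St0: "0 \<le> St" unfolding St_def using summ_shift[of N] Fpos by (intro suminf_nonneg) (auto simp: less_imp_le)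
  have St: "St < s / 4" using N0[rule_format, OF N(2)] St0 unfolding St_def by (simp add: add.commute add.left_commute)
  define a where "a = s / (2 * N)"
  have a: "0 < a" using s N by (simp add: a_def)
  define h where "h = (\<Prod>j<N. 1 - exp (- a * F (x0 + j)))"
  have h: "0 < h" unfolding h_def using a Fpos by (intro prod_pos) (auto simp: mult_pos_pos)
  have "\<forall>i\<ge>1. h / 2 \<le> prob {\<omega>\<in>space M. Texpl tau x0 i \<omega> \<le> ennreal s}"
  proof (intro allI impI)
    fix i :: nat assume i: "1 \<le> i"
    define H where "H = {\<omega>\<in>space M. \<forall>j\<in>{..<N}. tau i (x0 + j) \<omega> \<le> a}"
    define Tl where "Tl = {\<omega>\<in>space M. (\<Sum>j. ennreal (tau i (x0 + N + j) \<omega>)) < ennreal (s / 2)}"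
    have tm: "(\<lambda>\<omega>. \<Sum>j. ennreal (tau i (x0 + N + j) \<omega>)) \<in> borel_measurable M"
    proof -
      have "(\<lambda>\<omega>. ennreal (tau i (x0 + N + j) \<omega>)) \<in> borel_measurable M" for j
        using tau_meas[OF i, of "x0 + N + j"] by measurable
      then show ?thesis by measurable
    qed
    have Sc: "{\<omega>\<in>space M. ennreal (s / 2) \<le> (\<Sum>j. ennreal (tau i (x0 + N + j) \<omega>))} \<in> sets M"
      using tm by measurable
    have "prob {\<omega>\<in>space M. ennreal (s / 2) \<le> (\<Sum>j. ennreal (tau i (x0 + N + j) \<omega>))} \<le> St / (s / 2)"
      using markov[OF tm _ _ St0, of "s / 2"] nn_tail[OF i, of N] s unfolding St_def by simp
    also have "\<dots> \<le> 1 / 2" using St s by (simp add: field_simps)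
    finally have pc: "prob {\<omega>\<in>space M. ennreal (s / 2) \<le> (\<Sum>j. ennreal (tau i (x0 + N + j) \<omega>))} \<le> 1 / 2" .
    have "Tl = space M - {\<omega>\<in>space M. ennreal (s / 2) \<le> (\<Sum>j. ennreal (tau i (x0 + N + j) \<omega>))}"
      unfolding Tl_def by (auto simp: not_le)
    then have pTl: "1 / 2 \<le> prob Tl" using prob_compl[OF Sc] pc by simp
    have pH: "prob H = h" unfolding H_def h_def using head_prob[OF i N(1)] a by simp
    have "prob (H \<inter> Tl) = prob H * prob Tl" unfolding H_def Tl_def by (rule head_tail_indep[OF i])
    then have "h / 2 \<le> prob (H \<inter> Tl)" using pH pTl h by (simp add: mult_left_mono)
    also have "\<dots> \<le> prob {\<omega>\<in>space M. Texpl tau x0 i \<omega> \<le> ennreal s}"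
    proof (intro finite_measure_mono)
      show "{\<omega>\<in>space M. Texpl tau x0 i \<omega> \<le> ennreal s} \<in> sets M" using Texpl_meas[OF i] by measurable
      show "H \<inter> Tl \<subseteq> {\<omega>\<in>space M. Texpl tau x0 i \<omega> \<le> ennreal s}"
      proof safe
        fix \<omega> assume w: "\<omega> \<in> H" "\<omega> \<in> Tl"
        then show "\<omega> \<in> space M" by (simp add: H_def)
        have "(\<Sum>j<N. ennreal (tau i (x0 + j) \<omega>)) \<le> (\<Sum>j<N. ennreal a)"
          using w(1) unfolding H_def by (intro sum_mono ennreal_leI) auto
        also have "\<dots> = ennreal (s / 2)" using N a by (simp add: a_def ennreal_of_nat_eq_real_of_nat flip: ennreal_mult)
        finally have "Texpl tau x0 i \<omega> \<le> ennreal (s / 2) + ennreal (s / 2)"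
          unfolding T_split[of i \<omega> N] using w(2) unfolding Tl_def by (intro add_mono) auto
        also have "\<dots> = ennreal s" using s by (simp flip: ennreal_plus)
        finally show "Texpl tau x0 i \<omega> \<le> ennreal s" .
      qed
    qed
    finally show "h / 2 \<le> prob {\<omega>\<in>space M. Texpl tau x0 i \<omega> \<le> ennreal s}" .
  qed
  then show ?thesis using h by (intro exI[of _ "h / 2"]) auto
qed

end

definition Tg :: "(nat \<Rightarrow> real) \<Rightarrow> ennreal" where "Tg g = (\<Sum>j. ennreal (g j))"

lemma Tg_meas: "Tg \<in> borel_measurable (PiM UNIV (\<lambda>_. borel))"
  unfolding Tg_def by measurable

context usetup begin

lemma Texpl_Tg: "Texpl tau x0 i \<omega> = Tg (\<lambda>j. tau i (x0 + j) \<omega>)"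
  unfolding Texpl_def Tg_def ..

lemma prod3:
  fixes \<Phi>1 \<Phi>2 \<Phi>3 :: "(nat \<Rightarrow> real) \<Rightarrow> bool"
  assumes A: "3 \<le> A"
    and m1: "\<Phi>1 \<in> measurable (PiM UNIV (\<lambda>_. borel)) (count_space UNIV)"
    and m2: "\<Phi>2 \<in> measurable (PiM UNIV (\<lambda>_. borel)) (count_space UNIV)"
    and m3: "\<Phi>3 \<in> measurable (PiM UNIV (\<lambda>_. borel)) (count_space UNIV)"
  shows "prob ({\<omega>\<in>space M. \<Phi>1 (\<lambda>j. tau 1 (x0 + j) \<omega>)} \<inter> {\<omega>\<in>space M. \<Phi>2 (\<lambda>j. tau 2 (x0 + j) \<omega>)} \<inter>
      (\<Inter>i\<in>{3..A}. {\<omega>\<in>space M. \<Phi>3 (\<lambda>j. tau i (x0 + j) \<omega>)})) =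
    prob {\<omega>\<in>space M. \<Phi>1 (\<lambda>j. tau 1 (x0 + j) \<omega>)} * prob {\<omega>\<in>space M. \<Phi>2 (\<lambda>j. tau 2 (x0 + j) \<omega>)} *
      (\<Prod>i\<in>{3..A}. prob {\<omega>\<in>space M. \<Phi>3 (\<lambda>j. tau i (x0 + j) \<omega>)})"
proof -
  define \<Phi> where "\<Phi> i = (if i = 1 then \<Phi>1 else if i = 2 then \<Phi>2 else \<Phi>3)" for i :: nat
  have J: "{1..A} \<subseteq> {1..}" "finite {1..A}" "{1..A} \<noteq> {}" using A by auto
  have eq: "{1..A} = insert 1 (insert 2 {3..A})" using A by auto
  have "prob (\<Inter>i\<in>{1..A}. {\<omega>\<in>space M. \<Phi> i (\<lambda>j. tau i (x0 + j) \<omega>)}) =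
      (\<Prod>i\<in>{1..A}. prob {\<omega>\<in>space M. \<Phi> i (\<lambda>j. tau i (x0 + j) \<omega>)})"
    by (rule agents_indep[OF J]) (auto simp: \<Phi>_def m1 m2 m3)
  moreover have "(\<Inter>i\<in>{3..A}. {\<omega>\<in>space M. \<Phi> i (\<lambda>j. tau i (x0 + j) \<omega>)}) = (\<Inter>i\<in>{3..A}. {\<omega>\<in>space M. \<Phi>3 (\<lambda>j. tau i (x0 + j) \<omega>)})"
    by (intro INF_cong) (auto simp: \<Phi>_def)
  moreover have "(\<Prod>i\<in>{3..A}. prob {\<omega>\<in>space M. \<Phi> i (\<lambda>j. tau i (x0 + j) \<omega>)}) = (\<Prod>i\<in>{3..A}. prob {\<omega>\<in>space M. \<Phi>3 (\<lambda>j. tau i (x0 + j) \<omega>)})"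
    by (intro prod.cong) (auto simp: \<Phi>_def)
  ultimately show ?thesis unfolding eq by (simp add: \<Phi>_def Int_assoc mult.assoc)
qed

lemma prodB:
  fixes \<Phi>3 :: "(nat \<Rightarrow> real) \<Rightarrow> bool"
  assumes A: "3 \<le> A"
    and m3: "\<Phi>3 \<in> measurable (PiM UNIV (\<lambda>_. borel)) (count_space UNIV)"
  shows "prob (\<Inter>i\<in>{3..A}. {\<omega>\<in>space M. \<Phi>3 (\<lambda>j. tau i (x0 + j) \<omega>)}) =
      (\<Prod>i\<in>{3..A}. prob {\<omega>\<in>space M. \<Phi>3 (\<lambda>j. tau i (x0 + j) \<omega>)})"
  using A by (intro agents_indep) (auto simp: m3)

lemma gt_meas: "(\<lambda>g. ennreal a < Tg g) \<in> measurable (PiM UNIV (\<lambda>_. borel)) (count_space UNIV)"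
  using Tg_meas unfolding Measurable.pred_def by measurable

lemma ge_meas: "(\<lambda>g. ennreal a \<le> Tg g) \<in> measurable (PiM UNIV (\<lambda>_. borel)) (count_space UNIV)"
  using Tg_meas unfolding Measurable.pred_def by measurable

lemma W_meas: "(\<lambda>g. (\<forall>j\<in>{..<m::nat}. g j \<le> a) \<and> b < g m) \<in> measurable (PiM UNIV (\<lambda>_. borel :: real measure)) (count_space UNIV)"
proof -
  have c: "(\<lambda>g. g j) \<in> borel_measurable (PiM UNIV (\<lambda>_. borel :: real measure))" for j
    by (rule measurable_component_singleton) simp
  have p1: "Measurable.pred (Pi\<^sub>M UNIV (\<lambda>_. borel)) (\<lambda>g. g j \<le> a)" for j
    unfolding Measurable.pred_def by (rule borel_measurable_le[OF c]) simp
  have p2: "Measurable.pred (Pi\<^sub>M UNIV (\<lambda>_. borel)) (\<lambda>g. b < g m)"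
    unfolding Measurable.pred_def by (rule borel_measurable_less[OF _ c]) simp
  show ?thesis by (intro pred_intros_logic(3) pred_intros_finite(3) p1 p2) auto
qed

end

locale mainl = usetup +
  fixes s :: real and x2 :: nat
  assumes s: "0 < s" and x2: "x0 < x2"
begin

abbreviation "m \<equiv> x2 - x0"

definition "evgt a i = {\<omega>\<in>space M. ennreal a < Texpl tau x0 i \<omega>}"
definition "evge a i = {\<omega>\<in>space M. ennreal a \<le> Texpl tau x0 i \<omega>}"
definition "W a b = {\<omega>\<in>space M. (\<forall>j\<in>{..<m}. tau 2 (x0 + j) \<omega> \<le> a) \<and> b < tau 2 x2 \<omega>}"

lemma evgt_eq: "evgt a i = {\<omega>\<in>space M. (\<lambda>g. ennreal a < Tg g) (\<lambda>j. tau i (x0 + j) \<omega>)}"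
  unfolding evgt_def Texpl_Tg ..
lemma evge_eq: "evge a i = {\<omega>\<in>space M. (\<lambda>g. ennreal a \<le> Tg g) (\<lambda>j. tau i (x0 + j) \<omega>)}"
  unfolding evge_def Texpl_Tg ..
lemma W_eq: "W a b = {\<omega>\<in>space M. (\<lambda>g. (\<forall>j\<in>{..<m}. g j \<le> a) \<and> b < g m) (\<lambda>j. tau 2 (x0 + j) \<omega>)}"
  unfolding W_def using x2 by simp

lemma evgt_sets: "1 \<le> i \<Longrightarrow> evgt a i \<in> sets M"
  unfolding evgt_def using Texpl_meas by measurable
lemma evge_sets: "1 \<le> i \<Longrightarrow> evge a i \<in> sets M"
  unfolding evge_def using Texpl_meas by measurable
lemma W_sets: "W a b \<in> sets M"
proof -
  have "W a b = (\<Inter>j\<in>{..<m}. {\<omega>\<in>space M. tau 2 (x0 + j) \<omega> \<le> a}) \<inter> {\<omega>\<in>space M. b < tau 2 x2 \<omega>} \<inter> space M"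
    unfolding W_def by auto
  also have "\<dots> \<in> sets M"
  proof (intro sets.Int sets.finite_INT)
    fix j show "{\<omega>\<in>space M. tau 2 (x0 + j) \<omega> \<le> a} \<in> sets M"
      using tau_meas[of 2 "x0 + j"] by measurable
  next
    show "{\<omega>\<in>space M. b < tau 2 x2 \<omega>} \<in> sets M" using tau_meas[of 2 x2] x2 by (simp add: less_imp_le)
  qed (use x2 in \<open>auto simp: lessThan_empty_iff\<close>)
  finally show ?thesis .
qed

lemma Om_path: "\<omega> \<in> Om \<Longrightarrow> 1 \<le> A \<Longrightarrow> path tau x0 A \<omega>"
  unfolding Om_def by unfold_locales auto

lemma incl_G:
  assumes A: "3 \<le> A" and u: "0 \<le> u" "u < K" and \<omega>: "\<omega> \<in> Om"
    and in1: "\<omega> \<in> evgt K 1" and in2: "\<omega> \<in> W (u / m) K" and in3: "\<omega> \<in> (\<Inter>i\<in>{3..A}. evgt u i)"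
    and out: "\<omega> \<notin> (\<Inter>i\<in>{3..A}. evge K i)"
  shows "\<omega> \<in> {\<omega>\<in>space M. enat x2 \<le> urn_lim tau x0 A 2 \<omega>}" "\<omega> \<in> Ecal M tau x0 A"
    "ennreal u < Smin tau x0 A \<omega>"
proof -
  interpret P: path tau x0 A \<omega> using Om_path[OF \<omega>] A by simp
  have sp: "\<omega> \<in> space M" using \<omega> by (simp add: Om_def)
  show uS: "ennreal u < Smin tau x0 A \<omega>" using in3 A by (auto simp: evgt_def Smin_gt_iff)
  have SK: "Smin tau x0 A \<omega> < ennreal K"
    using out A sp by (auto simp: evge_def Smin_ge_iff not_le[symmetric])
  have K0: "0 \<le> K" using u by simp
  have S1: "Smin tau x0 A \<omega> < Texpl tau x0 1 \<omega>" using SK in1 by (auto simp: evgt_def)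
  have "ennreal K < ennreal (tau 2 x2 \<omega>)" using in2 K0 by (auto simp: W_def ennreal_less_iff)
  also have "\<dots> \<le> Texpl tau x0 2 \<omega>" using T_ge_term[of 2 m \<omega>] x2 by simp
  finally have S2: "Smin tau x0 A \<omega> < Texpl tau x0 2 \<omega>" using SK by simp
  have two: "(2::nat) \<in> {1..A}" using A by simp
  have "ps tau x0 2 (x2 - 1) \<omega> = (\<Sum>j<m. tau 2 (x0 + j) \<omega>)"
    using ps_sum[of x0 "x2 - 1" tau 2 \<omega>] x2 by simp
  also have "\<dots> \<le> (\<Sum>j<m. u / m)" using in2 by (intro sum_mono) (auto simp: W_def)
  also have "\<dots> = u" using x2 by simp
  finally have "ennreal (ps tau x0 2 (x2 - 1) \<omega>) \<le> ennreal u" by (rule ennreal_leI)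
  then have R: "ennreal (ps tau x0 2 (x2 - 1) \<omega>) < Smin tau x0 A \<omega>" using uS by simp
  show "\<omega> \<in> {\<omega>\<in>space M. enat x2 \<le> urn_lim tau x0 A 2 \<omega>}"
    using P.path_C[OF A S1 S2 x2 R] sp by simp
  show "\<omega> \<in> Ecal M tau x0 A"
    using P.path_notsMon[OF A S1 S2, of 1] P.path_notsMon[OF A S1 S2, of 2] sp by (simp add: Ecal_def)
qed

lemma incl_E:
  assumes A: "3 \<le> A" and K: "0 \<le> K" and \<omega>: "\<omega> \<in> Om"
    and in1: "\<omega> \<in> evgt K 1" and in2: "\<omega> \<in> evgt K 2"
    and out: "\<omega> \<notin> (\<Inter>i\<in>{3..A}. evge K i)"
  shows "\<omega> \<in> Ecal M tau x0 A"
proof -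
  interpret P: path tau x0 A \<omega> using Om_path[OF \<omega>] A by simp
  have sp: "\<omega> \<in> space M" using \<omega> by (simp add: Om_def)
  have SK: "Smin tau x0 A \<omega> < ennreal K"
    using out A sp by (auto simp: evge_def Smin_ge_iff not_le[symmetric])
  have S1: "Smin tau x0 A \<omega> < Texpl tau x0 1 \<omega>" using SK in1 by (auto simp: evgt_def)
  have S2: "Smin tau x0 A \<omega> < Texpl tau x0 2 \<omega>" using SK in2 by (auto simp: evgt_def)
  show "\<omega> \<in> Ecal M tau x0 A"
    using P.path_notsMon[OF A S1 S2, of 1] P.path_notsMon[OF A S1 S2, of 2] sp by (simp add: Ecal_def)
qed

lemma incl_CE:
  assumes A: "3 \<le> A" and v: "0 \<le> v" and \<omega>: "\<omega> \<in> Om"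
    and C: "\<omega> \<in> {\<omega>\<in>space M. enat x2 \<le> urn_lim tau x0 A 2 \<omega>}"
  shows "\<omega> \<in> {\<omega>\<in>space M. tau 2 x0 \<omega> \<le> v} \<union> (\<Inter>i\<in>{3..A}. evgt v i)"
proof -
  interpret P: path tau x0 A \<omega> using Om_path[OF \<omega>] A by simp
  have sp: "\<omega> \<in> space M" using \<omega> by (simp add: Om_def)
  have S: "ennreal (tau 2 x0 \<omega>) < Smin tau x0 A \<omega>" using P.path_Cinv[OF A x2] C by simp
  show ?thesis
  proof (cases "tau 2 x0 \<omega> \<le> v")
    case True then show ?thesis using sp by simp
  next
    case False
    then have "ennreal v < ennreal (tau 2 x0 \<omega>)" using v by (simp add: ennreal_less_iff)
    then have "ennreal v < Smin tau x0 A \<omega>" using S by simp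
    then show ?thesis using A sp by (auto simp: evgt_def Smin_gt_iff)
  qed
qed

end

lemma prod_half:
  fixes r p :: "nat \<Rightarrow> real"
  assumes "\<And>i. i \<in> N \<Longrightarrow> 0 \<le> r i" "\<And>i. i \<in> N \<Longrightarrow> r i \<le> p i / 2"
  shows "(\<Prod>i\<in>N. r i) \<le> (1 / 2) ^ card N * (\<Prod>i\<in>N. p i)"
proof -
  have "(\<Prod>i\<in>N. r i) \<le> (\<Prod>i\<in>N. p i / 2)" using assms by (intro prod_mono) auto
  also have "\<dots> = (1 / 2) ^ card N * (\<Prod>i\<in>N. p i)"
    by (simp add: prod_dividef prod_constant field_simps power_one_over)
  finally show ?thesis .
qed

lemma prod_theta:
  fixes q p :: "nat \<Rightarrow> real"
  assumes "\<And>i. i \<in> N \<Longrightarrow> 0 \<le> q i" "\<And>i. i \<in> N \<Longrightarrow> q i \<le> \<theta> * p i"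
  shows "(\<Prod>i\<in>N. q i) \<le> \<theta> ^ card N * (\<Prod>i\<in>N. p i)"
proof -
  have "(\<Prod>i\<in>N. q i) \<le> (\<Prod>i\<in>N. \<theta> * p i)" using assms by (intro prod_mono) auto
  also have "\<dots> = \<theta> ^ card N * (\<Prod>i\<in>N. p i)"
    by (simp add: prod.distrib prod_constant)
  finally show ?thesis .
qed

context mainl begin

lemma evgt_eq': "evgt a i = {\<omega>\<in>space M. ennreal a < Tg (\<lambda>j. tau i (x0 + j) \<omega>)}"
  unfolding evgt_def Texpl_Tg ..
lemma evge_eq': "evge a i = {\<omega>\<in>space M. ennreal a \<le> Tg (\<lambda>j. tau i (x0 + j) \<omega>)}"
  unfolding evge_def Texpl_Tg ..
lemma W_eq': "W a b = {\<omega>\<in>space M. (\<forall>j\<in>{..<m}. tau 2 (x0 + j) \<omega> \<le> a) \<and> b < tau 2 (x0 + m) \<omega>}"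
  unfolding W_def using x2 by simp

lemma prob_B: "3 \<le> A \<Longrightarrow> prob {\<omega>\<in>space M. ennreal s < Smin tau x0 A \<omega>} = (\<Prod>i\<in>{3..A}. prob (evgt s i))"
proof -
  assume A: "3 \<le> A"
  have "{\<omega>\<in>space M. ennreal s < Smin tau x0 A \<omega>} = (\<Inter>i\<in>{3..A}. evgt s i)"
    using A by (auto simp: evgt_def Smin_gt_iff)
  then show ?thesis using prodB[OF A gt_meas, of s] unfolding evgt_eq' by simp
qed

definition "GX A a K = evgt K 1 \<inter> W (a / m) K \<inter> (\<Inter>i\<in>{3..A}. evgt a i)"
definition "GY A K a = evgt K 1 \<inter> W (a / m) K \<inter> (\<Inter>i\<in>{3..A}. evge K i)"

lemma GX_sets: "3 \<le> A \<Longrightarrow> GX A a K \<in> sets M"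
  unfolding GX_def using evgt_sets W_sets by (intro sets.Int sets.finite_INT) auto
lemma GY_sets: "3 \<le> A \<Longrightarrow> GY A K a \<in> sets M"
  unfolding GY_def using evgt_sets evge_sets W_sets by (intro sets.Int sets.finite_INT) auto

lemma GY_sub: "0 \<le> a \<Longrightarrow> a < K \<Longrightarrow> GY A K a \<subseteq> GX A a K"
proof -
  assume a: "0 \<le> a" "a < K"
  have "evge K i \<subseteq> evgt a i" for i
  proof
    fix \<omega> assume "\<omega> \<in> evge K i"
    moreover have "ennreal a < ennreal K" using a by (simp add: ennreal_less_iff)
    ultimately show "\<omega> \<in> evgt a i" by (auto simp: evge_def evgt_def)
  qed
  then show ?thesis unfolding GX_def GY_def by blast
qed

lemma prob_GX: "3 \<le> A \<Longrightarrow> prob (GX A a K) = prob (evgt K 1) * prob (W (a / m) K) * (\<Prod>i\<in>{3..A}. prob (evgt a i))"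
  using prod3[OF _ gt_meas W_meas gt_meas, of A K m "a / m" K a] unfolding GX_def evgt_eq' W_eq' by simp

lemma prob_GY: "3 \<le> A \<Longrightarrow> prob (GY A K a) = prob (evgt K 1) * prob (W (a / m) K) * (\<Prod>i\<in>{3..A}. prob (evge K i))"
  using prod3[OF _ gt_meas W_meas ge_meas, of A K m "a / m" K K] unfolding GY_def evgt_eq' evge_eq' W_eq' by simp

end

context mainl begin

definition "es = exp (- s * F x0)"
definition "K0 = max (s + 1) (2 * Stot / es + 1)"

lemma es: "0 < es" "es \<le> 1"
proof -
  have "0 \<le> s * F x0" using s Fk[of x0] by simp
  then show "0 < es" "es \<le> 1" unfolding es_def by auto
qed

lemma K0: "s < K0" "0 < K0" "Stot / K0 \<le> es / 2"
proof -
  show "s < K0" "0 < K0" using s by (auto simp: K0_def)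
  have "2 * Stot / es \<le> K0" by (simp add: K0_def)
  then have "2 * Stot \<le> K0 * es" using es by (simp add: field_simps)
  then show "Stot / K0 \<le> es / 2" using \<open>0 < K0\<close> es by (simp add: field_simps)
qed

lemma q_ge: "1 \<le> i \<Longrightarrow> es \<le> prob (evgt s i)"
  unfolding es_def evgt_def using pT_gt[of i s] s by simp

lemma evgt_mono: "a \<le> b \<Longrightarrow> evgt b i \<subseteq> evgt a i"
  unfolding evgt_def by (auto intro: order.strict_trans1[OF ennreal_leI])

lemma pgt_mono: "1 \<le> i \<Longrightarrow> a \<le> b \<Longrightarrow> prob (evgt b i) \<le> prob (evgt a i)"
  using evgt_mono evgt_sets by (intro finite_measure_mono) auto

lemma r_le: "1 \<le> i \<Longrightarrow> prob (evge K0 i) \<le> prob (evgt s i) / 2"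
proof -
  assume i: "1 \<le> i"
  have "prob (evge K0 i) \<le> Stot / K0" unfolding evge_def using pT_ge[OF i K0(2)] .
  also have "\<dots> \<le> es / 2" by (rule K0(3))
  also have "\<dots> \<le> prob (evgt s i) / 2" using q_ge[OF i] by simp
  finally show ?thesis .
qed

lemma prob_W_pos: "0 < a \<Longrightarrow> 0 \<le> b \<Longrightarrow> 0 < prob (W a b)"
proof -
  assume a: "0 < a" and b: "0 \<le> b"
  define J where "J = (\<lambda>j. (2::nat, x0 + j)) ` {..m}"
  define As where "As p = (if snd p < x2 then {..a} else {b<..})" for p :: "nat \<times> nat"
  have J: "J \<noteq> {}" "finite J" "J \<subseteq> Ind" by (auto simp: J_def)
  have "prob (\<Inter>p\<in>J. case_prod tau p -` As p \<inter> space M) = (\<Prod>p\<in>J. prob (case_prod tau p -` As p \<inter> space M))"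
    by (rule indep_varsD[OF indep J]) (simp add: As_def)
  moreover have "(\<Inter>p\<in>J. case_prod tau p -` As p \<inter> space M) = W a b"
  proof
    show "(\<Inter>p\<in>J. case_prod tau p -` As p \<inter> space M) \<subseteq> W a b"
    proof
      fix \<omega> assume w: "\<omega> \<in> (\<Inter>p\<in>J. case_prod tau p -` As p \<inter> space M)"
      have "(2, x0 + m) \<in> J" by (auto simp: J_def)
      then have "\<omega> \<in> case_prod tau (2, x0 + m) -` As (2, x0 + m) \<inter> space M" using w by blast
      then have "b < tau 2 x2 \<omega>" "\<omega> \<in> space M" using x2 by (auto simp: As_def)
      moreover have "tau 2 (x0 + j) \<omega> \<le> a" if "j < m" for j
      proof -
        have "(2, x0 + j) \<in> J" using that by (auto simp: J_def)
        then have "\<omega> \<in> case_prod tau (2, x0 + j) -` As (2, x0 + j) \<inter> space M" using w by blast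
        then show ?thesis using that by (auto simp: As_def split: if_splits)
      qed
      ultimately show "\<omega> \<in> W a b" by (auto simp: W_def)
    qed
    show "W a b \<subseteq> (\<Inter>p\<in>J. case_prod tau p -` As p \<inter> space M)"
    proof
      fix \<omega> assume w: "\<omega> \<in> W a b"
      show "\<omega> \<in> (\<Inter>p\<in>J. case_prod tau p -` As p \<inter> space M)"
      proof
        fix p assume "p \<in> J"
        then obtain j where j: "j \<le> m" "p = (2, x0 + j)" by (auto simp: J_def)
        show "\<omega> \<in> case_prod tau p -` As p \<inter> space M"
        proof (cases "j < m")
          case True then show ?thesis using w j by (auto simp: W_def As_def)
        next
          case False then have "x0 + j = x2" using j x2 by simp
          then show ?thesis using w j by (auto simp: W_def As_def)
        qed
      qed
    qed
  qed
  moreover have "0 < (\<Prod>p\<in>J. prob (case_prod tau p -` As p \<inter> space M))"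
  proof (intro prod_pos)
    fix p assume "p \<in> J"
    then obtain j where j: "j \<le> m" "p = (2, x0 + j)" by (auto simp: J_def)
    show "0 < prob (case_prod tau p -` As p \<inter> space M)"
    proof (cases "j < m")
      case True
      then have "case_prod tau p -` As p \<inter> space M = {\<omega>\<in>space M. tau 2 (x0 + j) \<omega> \<le> a}"
        using j by (auto simp: As_def)
      moreover have "prob {\<omega>\<in>space M. tau 2 (x0 + j) \<omega> \<le> a} = 1 - exp (- a * F (x0 + j))"
        using prob_tau_le[of 2 "x0 + j" a] a by simp
      moreover have "exp (- a * F (x0 + j)) < 1" using a Fpos by (simp add: mult_pos_pos)
      ultimately show ?thesis by simp
    next
      case False
      then have "j = m" using j by simp
      then have "case_prod tau p -` As p \<inter> space M = {\<omega>\<in>space M. b < tau 2 x2 \<omega>}"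
        using j x2 by (auto simp: As_def)
      moreover have "prob {\<omega>\<in>space M. b < tau 2 x2 \<omega>} = exp (- b * F x2)"
        using prob_tau_gt[of 2 x2 b] b x2 by simp
      ultimately show ?thesis by simp
    qed
  qed
  ultimately show ?thesis by simp
qed

lemma G_lower:
  assumes A: "3 \<le> A" and a: "0 < a" "a \<le> s"
  shows "prob (evgt K0 1) * prob (W (a / m) K0) * (\<Prod>i\<in>{3..A}. prob (evgt a i)) / 2 \<le> prob (GX A a K0 - GY A K0 a)"
proof -
  have aK: "a < K0" using a K0 by simp
  have card: "card {3..A} = A - 2" by simp
  have pos: "0 \<le> prob (evgt K0 1) * prob (W (a / m) K0)" by simp
  have "(\<Prod>i\<in>{3..A}. prob (evge K0 i)) \<le> (1 / 2) ^ card {3..A} * (\<Prod>i\<in>{3..A}. prob (evgt a i))"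
  proof (rule prod_half)
    fix i assume i: "i \<in> {3..A}"
    show "prob (evge K0 i) \<le> prob (evgt a i) / 2"
      using r_le[of i] pgt_mono[of i a s] i a by simp
  qed simp
  also have "\<dots> \<le> (1 / 2) * (\<Prod>i\<in>{3..A}. prob (evgt a i))"
  proof (intro mult_right_mono)
    have "1 \<le> card {3..A}" using A card by simp
    then have "(1 / 2 :: real) ^ card {3..A} \<le> (1 / 2) ^ 1" by (intro power_decreasing) auto
    then show "(1 / 2 :: real) ^ card {3..A} \<le> 1 / 2" by simp
  qed (simp add: prod_nonneg)
  finally have pr: "(\<Prod>i\<in>{3..A}. prob (evge K0 i)) \<le> (1 / 2) * (\<Prod>i\<in>{3..A}. prob (evgt a i))" .
  have "prob (GX A a K0 - GY A K0 a) = prob (GX A a K0) - prob (GY A K0 a)"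
    using GX_sets[OF A] GY_sets[OF A] GY_sub[of a K0 A] a aK by (intro finite_measure_Diff) auto
  also have "\<dots> = prob (evgt K0 1) * prob (W (a / m) K0) * ((\<Prod>i\<in>{3..A}. prob (evgt a i)) - (\<Prod>i\<in>{3..A}. prob (evge K0 i)))"
    using prob_GX[OF A] prob_GY[OF A] by (simp add: algebra_simps)
  finally have eq: "prob (GX A a K0 - GY A K0 a) = prob (evgt K0 1) * prob (W (a / m) K0) * ((\<Prod>i\<in>{3..A}. prob (evgt a i)) - (\<Prod>i\<in>{3..A}. prob (evge K0 i)))" .
  have "prob (evgt K0 1) * prob (W (a / m) K0) * ((\<Prod>i\<in>{3..A}. prob (evgt a i)) / 2) \<le>
      prob (evgt K0 1) * prob (W (a / m) K0) * ((\<Prod>i\<in>{3..A}. prob (evgt a i)) - (\<Prod>i\<in>{3..A}. prob (evge K0 i)))"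
    using pr pos by (intro mult_left_mono) auto
  then show ?thesis unfolding eq by simp
qed

end

context mainl begin

lemma evgt_compl: "1 \<le> i \<Longrightarrow> prob (evgt a i) = 1 - prob {\<omega>\<in>space M. Texpl tau x0 i \<omega> \<le> ennreal a}"
proof -
  assume i: "1 \<le> i"
  have S: "{\<omega>\<in>space M. Texpl tau x0 i \<omega> \<le> ennreal a} \<in> sets M" using Texpl_meas[OF i] by measurable
  have "evgt a i = space M - {\<omega>\<in>space M. Texpl tau x0 i \<omega> \<le> ennreal a}"
    unfolding evgt_def by (auto simp: not_le)
  then show ?thesis using prob_compl[OF S] by simp
qed

lemma E_lower:
  assumes A: "3 \<le> A"
  shows "prob (evgt K0 1) * prob (evgt K0 2) / 2 \<le> prob (Ecal M tau x0 A)"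
proof -
  define EXs where "EXs = evgt K0 1 \<inter> evgt K0 2"
  define EYs where "EYs = evgt K0 1 \<inter> evgt K0 2 \<inter> (\<Inter>i\<in>{3..A}. evge K0 i)"
  have cm: "(\<lambda>_. True) \<in> measurable (PiM UNIV (\<lambda>_. borel :: real measure)) (count_space UNIV)" by simp
  have ne: "{3..A} \<noteq> {}" using A by simp
  have "prob (evgt K0 1 \<inter> evgt K0 2 \<inter> (\<Inter>i\<in>{3..A}. space M)) = prob (evgt K0 1) * prob (evgt K0 2) * (\<Prod>i\<in>{3..A}. prob (space M))"
    using prod3[OF A gt_meas gt_meas cm, of K0 K0] unfolding evgt_eq' by simp
  moreover have "evgt K0 1 \<inter> evgt K0 2 \<inter> space M = evgt K0 1 \<inter> evgt K0 2" by (auto simp: evgt_def)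
  ultimately have pX: "prob EXs = prob (evgt K0 1) * prob (evgt K0 2)" using ne unfolding EXs_def by (simp add: prob_space)
  have pY: "prob EYs = prob (evgt K0 1) * prob (evgt K0 2) * (\<Prod>i\<in>{3..A}. prob (evge K0 i))"
    using prod3[OF A gt_meas gt_meas ge_meas, of K0 K0 K0] unfolding EYs_def evgt_eq' evge_eq' by simp
  have card: "1 \<le> card {3..A}" using A by simp
  have "(\<Prod>i\<in>{3..A}. prob (evge K0 i)) \<le> (1 / 2) ^ card {3..A} * (\<Prod>i\<in>{3..A}. 1)"
  proof (rule prod_half)
    fix i assume i: "i \<in> {3..A}"
    have "prob (evgt s i) \<le> 1" by (rule prob_le_1)
    moreover have "prob (evge K0 i) \<le> prob (evgt s i) / 2" using r_le[of i] i by simp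
    ultimately show "prob (evge K0 i) \<le> 1 / 2" by linarith
  qed simp
  also have "\<dots> = (1 / 2) ^ card {3..A}" by simp
  also have "\<dots> \<le> (1 / 2) ^ 1" using card by (intro power_decreasing) auto
  finally have pr: "(\<Prod>i\<in>{3..A}. prob (evge K0 i)) \<le> 1 / 2" by simp
  have sX: "EXs \<in> sets M" unfolding EXs_def using evgt_sets by auto
  have sY: "EYs \<in> sets M" unfolding EYs_def using evgt_sets evge_sets A by (intro sets.Int sets.finite_INT) auto
  have "prob (EXs - EYs) = prob EXs - prob EYs"
    using sX sY by (intro finite_measure_Diff) (auto simp: EXs_def EYs_def)
  also have "\<dots> = prob (evgt K0 1) * prob (evgt K0 2) * (1 - (\<Prod>i\<in>{3..A}. prob (evge K0 i)))"
    unfolding pX pY by (simp add: algebra_simps)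
  finally have eq: "prob (EXs - EYs) = prob (evgt K0 1) * prob (evgt K0 2) * (1 - (\<Prod>i\<in>{3..A}. prob (evge K0 i)))" .
  have "prob (evgt K0 1) * prob (evgt K0 2) * (1 / 2) \<le> prob (evgt K0 1) * prob (evgt K0 2) * (1 - (\<Prod>i\<in>{3..A}. prob (evge K0 i)))"
    using pr by (intro mult_left_mono) auto
  then have "prob (evgt K0 1) * prob (evgt K0 2) / 2 \<le> prob (EXs - EYs)" unfolding eq by simp
  also have "\<dots> \<le> prob (Ecal M tau x0 A)"
  proof (rule prob_le_good)
    show "EXs - EYs \<in> sets M" using sX sY by auto
    show "Ecal M tau x0 A \<in> sets M" by (rule Ecal_sets)
    show "(EXs - EYs) \<inter> Om \<subseteq> Ecal M tau x0 A"
    proof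
      fix \<omega> assume w: "\<omega> \<in> (EXs - EYs) \<inter> Om"
      show "\<omega> \<in> Ecal M tau x0 A"
        by (rule incl_E[OF A, of K0]) (use w K0 in \<open>auto simp: EXs_def EYs_def\<close>)
    qed
  qed
  finally show ?thesis .
qed

lemma CE_upper:
  assumes v: "0 < v"
  shows "\<exists>c>0. c \<le> 1 \<and> (\<forall>A\<ge>3. prob ({\<omega>\<in>space M. enat x2 \<le> urn_lim tau x0 A 2 \<omega>} \<inter> Ecal M tau x0 A)
      \<le> (1 - exp (- v * F x0)) + (1 - c) ^ (A - 2))"
proof -
  obtain c where c: "0 < c" "\<forall>i\<ge>1. c \<le> prob {\<omega>\<in>space M. Texpl tau x0 i \<omega> \<le> ennreal v}"
    using small_ball[OF v] by blast
  have c1: "c \<le> 1" using c(2)[rule_format, of 1] prob_le_1 order.trans by auto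
  have "prob ({\<omega>\<in>space M. enat x2 \<le> urn_lim tau x0 A 2 \<omega>} \<inter> Ecal M tau x0 A)
      \<le> (1 - exp (- v * F x0)) + (1 - c) ^ (A - 2)" if A: "3 \<le> A" for A
  proof -
    define U where "U = {\<omega>\<in>space M. tau 2 x0 \<omega> \<le> v} \<union> (\<Inter>i\<in>{3..A}. evgt v i)"
    have s1: "{\<omega>\<in>space M. tau 2 x0 \<omega> \<le> v} \<in> sets M" using tau_meas[of 2 x0] by measurable
    have s2: "(\<Inter>i\<in>{3..A}. evgt v i) \<in> sets M" using evgt_sets A by (intro sets.finite_INT) auto
    have "prob ({\<omega>\<in>space M. enat x2 \<le> urn_lim tau x0 A 2 \<omega>} \<inter> Ecal M tau x0 A) \<le> prob U"
    proof (rule prob_le_good)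
      show "{\<omega>\<in>space M. enat x2 \<le> urn_lim tau x0 A 2 \<omega>} \<inter> Ecal M tau x0 A \<in> sets M"
        using Cset_sets[of x2 A] x2 Ecal_sets by auto
      show "U \<in> sets M" unfolding U_def using s1 s2 by auto
      show "{\<omega>\<in>space M. enat x2 \<le> urn_lim tau x0 A 2 \<omega>} \<inter> Ecal M tau x0 A \<inter> Om \<subseteq> U"
        unfolding U_def using incl_CE[OF A less_imp_le[OF v]] by blast
    qed
    also have "\<dots> \<le> prob {\<omega>\<in>space M. tau 2 x0 \<omega> \<le> v} + prob (\<Inter>i\<in>{3..A}. evgt v i)"
      unfolding U_def using s1 s2 by (rule measure_Un_le)
    also have "prob {\<omega>\<in>space M. tau 2 x0 \<omega> \<le> v} = 1 - exp (- v * F x0)"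
      using prob_tau_le[of 2 x0 v] v by simp
    also have "prob (\<Inter>i\<in>{3..A}. evgt v i) = (\<Prod>i\<in>{3..A}. prob (evgt v i))"
      using prodB[OF A gt_meas, of v] unfolding evgt_eq' by simp
    also have "\<dots> \<le> (1 - c) ^ card {3..A} * (\<Prod>i\<in>{3..A}. 1)"
    proof (rule prod_theta)
      fix i assume i: "i \<in> {3..A}"
      show "prob (evgt v i) \<le> (1 - c) * 1" using evgt_compl[of i v] c(2)[rule_format, of i] i by simp
    qed simp
    finally show ?thesis by simp
  qed
  then show ?thesis using c c1 by blast
qed

end

lemma one_minus_exp_le: "1 - exp (- y) \<le> (y::real)"
  using exp_ge_add_one_self[of "- y"] by simp

lemma pow_shift_tendsto: "0 \<le> (\<theta>::real) \<Longrightarrow> \<theta> < 1 \<Longrightarrow> (\<lambda>A. \<theta> ^ (A - 2)) \<longlonglongrightarrow> 0"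
proof -
  assume t: "0 \<le> \<theta>" "\<theta> < 1"
  have "(\<lambda>n. \<theta> ^ n) \<longlonglongrightarrow> 0" using t by (intro LIMSEQ_power_zero) simp
  then have "(\<lambda>n. \<theta> ^ ((n + 2) - 2)) \<longlonglongrightarrow> 0" by simp
  then show ?thesis by (rule LIMSEQ_offset)
qed

lemma eventually_pow_small:
  assumes "0 \<le> (\<theta>::real)" "\<theta> < 1" "0 < e"
  shows "eventually (\<lambda>A. \<theta> ^ (A - 2) \<le> e) sequentially"
  using order_tendstoD(2)[OF pow_shift_tendsto[OF assms(1,2)] assms(3)]
  by eventually_elim simp

lemma div_div_cancel: "(e::real) \<noteq> 0 \<Longrightarrow> (a / e) / (c / e) = a / c"
  by (cases "c = 0") (auto simp: field_simps)

context mainl begin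

lemma theta_exists:
  "\<exists>u \<theta>. 0 < u \<and> u \<le> s \<and> 0 \<le> \<theta> \<and> \<theta> < 1 \<and> (\<forall>i\<ge>1. prob (evgt s i) \<le> \<theta> * prob (evgt u i))"
proof -
  obtain c where c: "0 < c" "\<forall>i\<ge>1. c \<le> prob {\<omega>\<in>space M. Texpl tau x0 i \<omega> \<le> ennreal s}"
    using small_ball[OF s] by blast
  have c1: "c \<le> 1" using c(2)[rule_format, of 1] prob_le_1 order.trans by auto
  define u where "u = min s (c / (2 * F x0))"
  have F0: "0 < F x0" by (rule Fk)
  have u: "0 < u" "u \<le> s" "u * F x0 \<le> c / 2" using s c F0
    by (auto simp: u_def min_def field_simps)
  define \<theta> where "\<theta> = (1 - c) / (1 - c / 2)"
  have th: "0 \<le> \<theta>" "\<theta> < 1" using c c1 by (auto simp: \<theta>_def field_simps)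
  have "prob (evgt s i) \<le> \<theta> * prob (evgt u i)" if i: "1 \<le> i" for i
  proof -
    have "prob (evgt s i) \<le> 1 - c" using evgt_compl[OF i, of s] c(2)[rule_format, OF i] by simp
    also have "\<dots> = \<theta> * (1 - c / 2)" using c1 by (simp add: \<theta>_def field_simps)
    also have "\<dots> \<le> \<theta> * prob (evgt u i)"
    proof (intro mult_left_mono th(1))
      have "prob {\<omega>\<in>space M. Texpl tau x0 i \<omega> \<le> ennreal u} \<le> 1 - exp (- u * F x0)"
        using pT_le[OF i] u by simp
      also have "\<dots> \<le> u * F x0" using one_minus_exp_le[of "u * F x0"] by simp
      finally show "1 - c / 2 \<le> prob (evgt u i)" using evgt_compl[OF i, of u] u by simp
    qed
    finally show ?thesis .
  qed
  then show ?thesis using u th by blast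
qed

lemma pCE_small:
  assumes e: "0 < e"
  shows "eventually (\<lambda>A. prob ({\<omega>\<in>space M. enat x2 \<le> urn_lim tau x0 A 2 \<omega>} \<inter> Ecal M tau x0 A) \<le> e) sequentially"
proof -
  have F0: "0 < F x0" by (rule Fk)
  define v where "v = e / (2 * F x0)"
  have v: "0 < v" using e F0 by (simp add: v_def)
  obtain c where c: "0 < c" "c \<le> 1" "\<forall>A\<ge>3. prob ({\<omega>\<in>space M. enat x2 \<le> urn_lim tau x0 A 2 \<omega>} \<inter> Ecal M tau x0 A)
      \<le> (1 - exp (- v * F x0)) + (1 - c) ^ (A - 2)"
    using CE_upper[OF v] by blast
  have ex: "1 - exp (- v * F x0) \<le> e / 2"
    using one_minus_exp_le[of "v * F x0"] F0 by (simp add: v_def)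
  have "eventually (\<lambda>A. (1 - c) ^ (A - 2) \<le> e / 2) sequentially"
    using c e by (intro eventually_pow_small) auto
  moreover have "eventually (\<lambda>A. 3 \<le> A) sequentially" by (rule eventually_ge_at_top)
  ultimately show ?thesis
  proof eventually_elim
    case (elim A)
    then show ?case using c(3)[rule_format, of A] ex by simp
  qed
qed

end

context mainl begin

abbreviation "Bs A \<equiv> {\<omega>\<in>space M. ennreal s < Smin tau x0 A \<omega>}"
abbreviation "Cs A \<equiv> {\<omega>\<in>space M. enat x2 \<le> urn_lim tau x0 A 2 \<omega>}"
abbreviation "Es A \<equiv> Ecal M tau x0 A"

lemma sets_BCE: assumes "3 \<le> A" shows "Bs A \<in> sets M" "Cs A \<in> sets M" "Es A \<in> sets M"
  using Bset_sets[OF assms] Cset_sets[of x2 A] x2 Ecal_sets by auto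

lemma G_in:
  assumes A: "3 \<le> A" and a: "0 < a" "a \<le> s"
  shows "prob (GX A a K0 - GY A K0 a) \<le> prob ({\<omega>\<in>space M. ennreal a < Smin tau x0 A \<omega>} \<inter> Cs A \<inter> Es A)"
proof (rule prob_le_good)
  show "GX A a K0 - GY A K0 a \<in> sets M" using GX_sets[OF A] GY_sets[OF A] by auto
  show "{\<omega>\<in>space M. ennreal a < Smin tau x0 A \<omega>} \<inter> Cs A \<inter> Es A \<in> sets M"
    using Bset_sets[OF A] sets_BCE[OF A] by auto
  show "(GX A a K0 - GY A K0 a) \<inter> Om \<subseteq> {\<omega>\<in>space M. ennreal a < Smin tau x0 A \<omega>} \<inter> Cs A \<inter> Es A"
  proof
    fix \<omega> assume w: "\<omega> \<in> (GX A a K0 - GY A K0 a) \<inter> Om"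
    have aK: "a < K0" using a K0 by simp
    have i1: "\<omega> \<in> evgt K0 1" "\<omega> \<in> W (a / m) K0" "\<omega> \<in> (\<Inter>i\<in>{3..A}. evgt a i)" "\<omega> \<in> Om"
      using w by (auto simp: GX_def)
    have o: "\<omega> \<notin> (\<Inter>i\<in>{3..A}. evge K0 i)" using w by (auto simp: GX_def GY_def)
    note r = incl_G[OF A less_imp_le[OF a(1)] aK i1(4) i1(1) i1(2) i1(3) o]
    show "\<omega> \<in> {\<omega>\<in>space M. ennreal a < Smin tau x0 A \<omega>} \<inter> Cs A \<inter> Es A"
      using r i1(4) by (auto simp: Om_def)
  qed
qed

theorem main_thm:
  "filterlim (\<lambda>A. PA2_cond M tau x0 A (Bs A) (Cs A) / PA2 M tau x0 A (Bs A)) at_top sequentially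
   \<and> (\<lambda>A. PA2_cond M tau x0 A (Bs A) (Cs A)) \<longlonglongrightarrow> 0"
proof -
  obtain u \<theta> where u: "0 < u" "u \<le> s" and th: "0 \<le> \<theta>" "\<theta> < 1"
    and qth: "\<And>i. 1 \<le> i \<Longrightarrow> prob (evgt s i) \<le> \<theta> * prob (evgt u i)"
    using theta_exists by blast
  have F0: "0 < F x0" by (rule Fk)
  have m0: "0 < m" using x2 by simp
  define v1 where "v1 = prob (evgt K0 1)"
  define v2 where "v2 = prob (evgt K0 2)"
  define w2s where "w2s = prob (W (s / m) K0)"
  define w2u where "w2u = prob (W (u / m) K0)"
  have v1: "0 < v1"
  proof -
    have "exp (- K0 * F x0) \<le> v1" using pT_gt[of 1 K0] K0 unfolding v1_def evgt_def by simp
    then show ?thesis using exp_gt_zero[of "- K0 * F x0"] by linarith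
  qed
  have v2: "0 < v2"
  proof -
    have "exp (- K0 * F x0) \<le> v2" using pT_gt[of 2 K0] K0 unfolding v2_def evgt_def by simp
    then show ?thesis using exp_gt_zero[of "- K0 * F x0"] by linarith
  qed
  have w2s: "0 < w2s" unfolding w2s_def using s m0 K0 by (intro prob_W_pos) auto
  have w2u: "0 < w2u" unfolding w2u_def using u m0 K0 by (intro prob_W_pos) auto
  define Q where "Q A = (\<Prod>i\<in>{3..A}. prob (evgt s i))" for A
  define PU where "PU A = (\<Prod>i\<in>{3..A}. prob (evgt u i))" for A
  have Qpos: "0 < Q A" for A unfolding Q_def using q_ge es by (intro prod_pos) (auto intro: less_le_trans)
  have QPU: "Q A \<le> PU A" for A unfolding Q_def PU_def
    using pgt_mono u by (intro prod_mono) auto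
  have PUpos: "0 < PU A" for A using Qpos QPU less_le_trans by blast
  have QB: "prob (Bs A) = Q A" if "3 \<le> A" for A using prob_B[OF that] by (simp add: Q_def)
  have Qth: "Q A \<le> \<theta> ^ (A - 2) * PU A" for A
    using prod_theta[of "{3..A}" "\<lambda>i. prob (evgt s i)" \<theta> "\<lambda>i. prob (evgt u i)"] qth
    unfolding Q_def PU_def by simp
  have BCE_lo: "v1 * w2s * Q A / 2 \<le> prob (Bs A \<inter> Cs A \<inter> Es A)" if A: "3 \<le> A" for A
    using G_lower[OF A s order.refl] G_in[OF A s order.refl] unfolding v1_def w2s_def Q_def by linarith
  have CE_lo: "v1 * w2u * PU A / 2 \<le> prob (Cs A \<inter> Es A)" if A: "3 \<le> A" for A
  proof -
    have "prob ({\<omega>\<in>space M. ennreal u < Smin tau x0 A \<omega>} \<inter> Cs A \<inter> Es A) \<le> prob (Cs A \<inter> Es A)"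
      using sets_BCE[OF A] by (intro finite_measure_mono) auto
    then show ?thesis using G_lower[OF A u] G_in[OF A u] unfolding v1_def w2u_def PU_def by linarith
  qed
  have BCE_up: "prob (Bs A \<inter> Cs A \<inter> Es A) \<le> Q A" if A: "3 \<le> A" for A
  proof -
    have "prob (Bs A \<inter> Cs A \<inter> Es A) \<le> prob (Bs A)" using sets_BCE[OF A] by (intro finite_measure_mono) auto
    then show ?thesis using QB[OF A] by simp
  qed
  have BE_up: "prob (Bs A \<inter> Es A) \<le> Q A" if A: "3 \<le> A" for A
  proof -
    have "prob (Bs A \<inter> Es A) \<le> prob (Bs A)" using sets_BCE[OF A] by (intro finite_measure_mono) auto
    then show ?thesis using QB[OF A] by simp
  qed
  have BCE_BE: "prob (Bs A \<inter> Cs A \<inter> Es A) \<le> prob (Bs A \<inter> Es A)" if A: "3 \<le> A" for A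
    using sets_BCE[OF A] by (intro finite_measure_mono) auto
  have E_lo: "v1 * v2 / 2 \<le> prob (Es A)" if A: "3 \<le> A" for A
    using E_lower[OF A] unfolding v1_def v2_def .
  have c0: "0 < v1 * w2s" "0 < v1 * w2u" "0 < v1 * v2" using v1 v2 w2s w2u by auto
  have cond: "PA2_cond M tau x0 A (Bs A) (Cs A) = prob (Bs A \<inter> Cs A \<inter> Es A) / prob (Cs A \<inter> Es A)"
    if A: "3 \<le> A" for A
  proof -
    have "0 < prob (Es A)" using E_lo[OF A] c0 by linarith
    then show ?thesis unfolding PA2_cond_def PA2_def by (simp add: div_div_cancel Int_assoc)
  qed
  have pa2B: "PA2 M tau x0 A (Bs A) = prob (Bs A \<inter> Es A) / prob (Es A)" for A
    unfolding PA2_def ..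
  define g where "g A = 2 / (v1 * w2u) * \<theta> ^ (A - 2)" for A
  have up2: "PA2_cond M tau x0 A (Bs A) (Cs A) \<le> g A" if A: "3 \<le> A" for A
  proof -
    have "prob (Bs A \<inter> Cs A \<inter> Es A) / prob (Cs A \<inter> Es A) \<le> (\<theta> ^ (A - 2) * PU A) / (v1 * w2u * PU A / 2)"
    proof (rule frac_le)
      show "0 \<le> \<theta> ^ (A - 2) * PU A" using th PUpos[of A] by simp
      show "prob (Bs A \<inter> Cs A \<inter> Es A) \<le> \<theta> ^ (A - 2) * PU A" using BCE_up[OF A] Qth[of A] by linarith
      show "0 < v1 * w2u * PU A / 2" using c0 PUpos[of A] by simp
      show "v1 * w2u * PU A / 2 \<le> prob (Cs A \<inter> Es A)" by (rule CE_lo[OF A])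
    qed
    also have "\<dots> = g A" using PUpos[of A] c0 by (simp add: g_def field_simps)
    finally show ?thesis using cond[OF A] by simp
  qed
  have lo2: "0 \<le> PA2_cond M tau x0 A (Bs A) (Cs A)" for A
    unfolding PA2_cond_def PA2_def by simp
  have g0: "g \<longlonglongrightarrow> 0"
    unfolding g_def using tendsto_mult_left[OF pow_shift_tendsto[OF th], of "2 / (v1 * w2u)"] by simp
  have part2: "(\<lambda>A. PA2_cond M tau x0 A (Bs A) (Cs A)) \<longlonglongrightarrow> 0"
  proof (rule tendsto_sandwich[OF _ _ tendsto_const g0])
    show "eventually (\<lambda>A. 0 \<le> PA2_cond M tau x0 A (Bs A) (Cs A)) sequentially" using lo2 by simp
    show "eventually (\<lambda>A. PA2_cond M tau x0 A (Bs A) (Cs A) \<le> g A) sequentially"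
      using eventually_ge_at_top[of 3] by eventually_elim (rule up2)
  qed
  define c1 where "c1 = (v1 * w2s / 2) * (v1 * v2 / 2)"
  have c1: "0 < c1" using c0 by (simp add: c1_def)
  have lo1: "c1 / prob (Cs A \<inter> Es A) \<le> PA2_cond M tau x0 A (Bs A) (Cs A) / PA2 M tau x0 A (Bs A)
      \<and> 0 < prob (Cs A \<inter> Es A)" if A: "3 \<le> A" for A
  proof -
    define a where "a = prob (Bs A \<inter> Cs A \<inter> Es A)"
    define b where "b = prob (Bs A \<inter> Es A)"
    define cc where "cc = prob (Cs A \<inter> Es A)"
    define e where "e = prob (Es A)"
    have a: "v1 * w2s * Q A / 2 \<le> a" using BCE_lo[OF A] by (simp add: a_def)
    have "0 < v1 * w2s * Q A / 2" using c0 Qpos[of A] by simp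
    then have apos: "0 < a" using a by linarith
    have b: "b \<le> Q A" "a \<le> b" using BE_up[OF A] BCE_BE[OF A] by (simp_all add: a_def b_def)
    have bpos: "0 < b" using apos b by simp
    have e: "v1 * v2 / 2 \<le> e" using E_lo[OF A] by (simp add: e_def)
    have epos: "0 < e" using e c0 by linarith
    have "0 < v1 * w2u * PU A / 2" using c0 PUpos[of A] by simp
    then have ccpos: "0 < cc" using CE_lo[OF A] unfolding cc_def by linarith
    have cq: "PA2_cond M tau x0 A (Bs A) (Cs A) = a / cc" unfolding cond[OF A] a_def cc_def ..
    have pq: "PA2 M tau x0 A (Bs A) = b / e" unfolding pa2B b_def e_def ..
    have eq: "PA2_cond M tau x0 A (Bs A) (Cs A) / PA2 M tau x0 A (Bs A) = (a * e / b) / cc"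
      unfolding cq pq using epos bpos ccpos by (simp add: field_simps)
    have "c1 \<le> (v1 * w2s * Q A / 2) * (v1 * v2 / 2) / Q A" using Qpos[of A] by (simp add: c1_def field_simps)
    also have "\<dots> \<le> a * e / Q A"
      using a e c0 Qpos[of A] apos by (intro divide_right_mono mult_mono) auto
    also have "\<dots> \<le> a * e / b"
      using b bpos apos epos by (intro divide_left_mono) auto
    finally have "c1 \<le> a * e / b" .
    then have "c1 / cc \<le> (a * e / b) / cc" using ccpos by (intro divide_right_mono) auto
    then show ?thesis using eq ccpos unfolding cc_def by simp
  qed
  have part1: "filterlim (\<lambda>A. PA2_cond M tau x0 A (Bs A) (Cs A) / PA2 M tau x0 A (Bs A)) at_top sequentially"
    unfolding filterlim_at_top
  proof
    fix Z :: real
    define Z' where "Z' = max Z 1"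
    have Z': "0 < Z'" "Z \<le> Z'" by (auto simp: Z'_def)
    have "eventually (\<lambda>A. prob (Cs A \<inter> Es A) \<le> c1 / Z') sequentially"
      using c1 Z' by (intro pCE_small) simp
    moreover have "eventually (\<lambda>A. 3 \<le> A) sequentially" by (rule eventually_ge_at_top)
    ultimately show "eventually (\<lambda>A. Z \<le> PA2_cond M tau x0 A (Bs A) (Cs A) / PA2 M tau x0 A (Bs A)) sequentially"
    proof eventually_elim
      case (elim A)
      note l = lo1[OF elim(2)]
      have "Z' \<le> c1 / prob (Cs A \<inter> Es A)"
        using elim(1) l c1 Z' by (simp add: field_simps)
      then show ?case using l Z' by linarith
    qed
  qed
  show ?thesis using part1 part2 by blast
qed

end

theorem proposition4:
  fixes M :: "'a measure" and tau :: "nat \<Rightarrow> nat \<Rightarrow> 'a \<Rightarrow> real"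
    and x0 :: nat and F :: "nat \<Rightarrow> real" and s :: real and x2 :: nat
  assumes "prob_space M"
    and "1 \<le> x0"
    and "\<forall>k. 0 < F k"
    and "summable (\<lambda>k. 1 / F k)"
    and "\<forall>i\<ge>1. \<forall>k\<ge>x0. distributed M lborel (tau i k) (exponential_density (F k))"
    and "prob_space.indep_vars M (\<lambda>_. borel) (\<lambda>(i, k). tau i k) {(i, k). 1 \<le> i \<and> x0 \<le> k}"
    and "0 < s"
    and "x0 < x2"
  shows "filterlim (\<lambda>A. PA2_cond M tau x0 A {\<omega>\<in>space M. ennreal s < Smin tau x0 A \<omega>}
                                            {\<omega>\<in>space M. enat x2 \<le> urn_lim tau x0 A 2 \<omega>}
                        / PA2 M tau x0 A {\<omega>\<in>space M. ennreal s < Smin tau x0 A \<omega>})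
           at_top sequentially
       \<and> (\<lambda>A. PA2_cond M tau x0 A {\<omega>\<in>space M. ennreal s < Smin tau x0 A \<omega>}
                                  {\<omega>\<in>space M. enat x2 \<le> urn_lim tau x0 A 2 \<omega>})
           \<longlonglongrightarrow> 0"
proof -
  have "mainl M tau x0 F s x2"
    unfolding mainl_def mainl_axioms_def usetup_def usetup_axioms_def using assms by auto
  then interpret mainl M tau x0 F s x2 .
  show ?thesis using main_thm by simp
qed

end
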